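(* Let $m\ge1$ and let $K$ be the reproducing kernel of $\mathrm{PW}([-\frac1{2m},\frac1{2m}])$ with respect to the weight $1-s(x)^2$, i.e. the unique kernel with $f(w)=\int_{\mathbb{R}}f(x)\overline{K(w,x)}(1-s(x)^2)\,dx$ for all $w\in\mathbb{C}$ and $f\in\mathrm{PW}([-\frac1{2m},\frac1{2m}])$. Put $u_m=(\pi m\sqrt2)^{-1}$, $s_+(x,y)=\frac12(s(x-y)+s(x+y))$ and $k(w,z)=mK(mw,mz)$. Then for real $y$, \[ k(0,y)=\frac{s_+(u_m,y)}{-\sqrt2\sin(\pi u_m)+\pi u_m\sin(\pi u_m)+\cos(\pi u_m)}, \] and \[ K(0,0)=\frac{1}{\frac1{\sqrt2}\cot\!\big(\frac1{\sqrt2\,m}\big)-\frac{2m-1}{2m}}. \]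
   Context: $s(x)=\frac{\sin(\pi x)}{\pi x}$ (with $s(0)=1$). $\mathrm{PW}([-a,a])$ is the space of $f\in L^2(\mathbb{R})$ whose Fourier transform is supported in $[-a,a]$. Note $1-s(x)^2=W_2(x,0)$ where $W_2(x_1,x_2)=\det\big[\frac{\sin(\pi(x_i-x_j))}{\pi(x_i-x_j)}\big]_{i,j=1}^2$. *)

theory Defs
  imports "HOL-Analysis.Analysis"
begin

definition sinc :: "real \<Rightarrow> real" where
  "sinc x = (if x = 0 then 1 else sin (pi * x) / (pi * x))"

text \<open>Paley-Wiener space PW([-a,a]), functions identified with their entire
  extensions: f is the inverse Fourier transform (convention
  e^{2 pi i x xi}) of some L^2 function g supported on [-a,a].\<close>
definition PW :: "real \<Rightarrow> (complex \<Rightarrow> complex) set" where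
  "PW a = {f. \<exists>g :: real \<Rightarrow> complex.
      g \<in> borel_measurable lborel \<and>
      set_integrable lborel {-a..a} (\<lambda>\<xi>. (cmod (g \<xi>))\<^sup>2) \<and>
      (\<forall>w. f w = set_lebesgue_integral lborel {-a..a}
                 (\<lambda>\<xi>. g \<xi> * exp (2 * of_real pi * \<i> * w * of_real \<xi>)))}"

definition is_repr_kernel :: "real \<Rightarrow> (complex \<Rightarrow> complex \<Rightarrow> complex) \<Rightarrow> bool" where
  "is_repr_kernel a K \<longleftrightarrow>
     (\<forall>w. K w \<in> PW a) \<and>
     (\<forall>f\<in>PW a. \<forall>w. f w =
        (\<integral>x. f (of_real x) * cnj (K w (of_real x)) * of_real (1 - (sinc x)\<^sup>2) \<partial>lborel))"

definition u_m :: "real \<Rightarrow> real" where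
  "u_m m = 1 / (pi * m * sqrt 2)"

definition s_plus :: "real \<Rightarrow> real \<Rightarrow> real" where
  "s_plus x y = (sinc (x - y) + sinc (x + y)) / 2"

definition kscaled :: "real \<Rightarrow> (complex \<Rightarrow> complex \<Rightarrow> complex) \<Rightarrow> complex \<Rightarrow> complex \<Rightarrow> complex" where
  "kscaled m K w z = of_real m * K (of_real m * w) (of_real m * z)"

end

theory Submission
  imports Defs "HOL-Probability.Probability"
begin

definition kg :: "real \<Rightarrow> real \<Rightarrow> real" where
  "kg n t = n * sqrt (2*pi) * exp (-2*pi^2*n^2*t^2)"

lemma gauss_ft:
  assumes n: "n > 0"
  shows "(\<integral>x. complex_of_real (exp (-(x^2)/(2*n^2))) * cis (2*pi*x*t) \<partial>lborel) = complex_of_real (kg n t)"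
proof -
  have "char std_normal_distribution (2*pi*n*t) = exp (-((2*pi*n*t)^2)/2)"
    by (simp add: char_std_normal_distribution)
  moreover have "char std_normal_distribution (2*pi*n*t) = (\<integral>y. std_normal_density y *\<^sub>R iexp (2*pi*n*t*y) \<partial>lborel)"
    unfolding char_def by (subst integral_density) auto
  ultimately have 1: "(\<integral>y. std_normal_density y *\<^sub>R iexp (2*pi*n*t*y) \<partial>lborel) = exp (-((2*pi*n*t)^2)/2)" by simp
  have "(\<integral>x. complex_of_real (exp (-(x^2)/(2*n^2))) * cis (2*pi*x*t) \<partial>lborel)
     = \<bar>n\<bar> *\<^sub>R (\<integral>y. complex_of_real (exp (-((0 + n*y)^2)/(2*n^2))) * cis (2*pi*(0+n*y)*t) \<partial>lborel)"
    using n by (intro lborel_integral_real_affine) auto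
  also have "(\<lambda>y. complex_of_real (exp (-((0 + n*y)^2)/(2*n^2))) * cis (2*pi*(0+n*y)*t))
      = (\<lambda>y. complex_of_real (sqrt (2*pi)) * (std_normal_density y *\<^sub>R iexp (2*pi*n*t*y)))"
    using n by (auto simp: std_normal_density_def cis_conv_exp power_mult_distrib scaleR_conv_of_real mult_ac)
  also have "\<bar>n\<bar> *\<^sub>R (\<integral>y. complex_of_real (sqrt (2*pi)) * (std_normal_density y *\<^sub>R iexp (2*pi*n*t*y)) \<partial>lborel)
      = \<bar>n\<bar> *\<^sub>R (complex_of_real (sqrt (2*pi)) * exp (-((2*pi*n*t)^2)/2))"
    by (simp only: integral_mult_right_zero 1)
  also have "\<dots> = complex_of_real (kg n t)"
    using n by (simp add: kg_def scaleR_conv_of_real power_mult_distrib)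
  finally show ?thesis .
qed


lemma kg_pos: "n > 0 \<Longrightarrow> kg n t > 0" by (simp add: kg_def)
lemma kg_even: "kg n (-t) = kg n t" by (simp add: kg_def)

lemma kg_subst:
  fixes f :: "real \<Rightarrow> 'a::{banach, second_countable_topology}"
  assumes n: "n > 0"
  shows "(\<integral>z. kg n (p - z) *\<^sub>R f z \<partial>lborel) = (\<integral>v. std_normal_density v *\<^sub>R f (p + v/(2*pi*n)) \<partial>lborel)"
proof -
  have "(\<integral>z. kg n (p - z) *\<^sub>R f z \<partial>lborel) = \<bar>1/(2*pi*n)\<bar> *\<^sub>R (\<integral>v. kg n (p - (p + 1/(2*pi*n) * v)) *\<^sub>R f (p + 1/(2*pi*n) * v) \<partial>lborel)"
    using n by (intro lborel_integral_real_affine) auto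
  also have "\<dots> = (\<integral>v. (\<bar>1/(2*pi*n)\<bar> * kg n (p - (p + 1/(2*pi*n) * v))) *\<^sub>R f (p + 1/(2*pi*n) * v) \<partial>lborel)"
    by (simp add: integral_scaleR_right[symmetric] del: integral_scaleR_right)
  also have "\<dots> = (\<integral>v. std_normal_density v *\<^sub>R f (p + v/(2*pi*n)) \<partial>lborel)"
  proof (intro Bochner_Integration.integral_cong refl)
    fix v
    have "\<bar>1/(2*pi*n)\<bar> * kg n (p - (p + 1/(2*pi*n) * v)) = std_normal_density v"
      using n by (simp add: kg_def std_normal_density_def power_mult_distrib power_divide real_sqrt_mult field_simps)
    then show "(\<bar>1/(2*pi*n)\<bar> * kg n (p - (p + 1/(2*pi*n) * v))) *\<^sub>R f (p + 1/(2*pi*n) * v) = std_normal_density v *\<^sub>R f (p + v/(2*pi*n))"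
      by simp
  qed
  finally show ?thesis .
qed

lemma kg_alt: "kg n z = 2*pi*n * std_normal_density (0 + (2*pi*n)*z)"
  by (simp add: kg_def std_normal_density_def power_mult_distrib real_sqrt_mult field_simps)

lemma kg_integrable: "n > 0 \<Longrightarrow> integrable lborel (\<lambda>z. kg n (p - z))"
proof -
  assume n: "n > 0"
  have "integrable lborel (\<lambda>z. std_normal_density (0 + (2*pi*n)*z))"
    using n by (intro lborel_integrable_real_affine) auto
  then have "integrable lborel (\<lambda>z. kg n z)"
    unfolding kg_alt by (intro integrable_mult_right)
  then have "integrable lborel (\<lambda>z. kg n (p + (-1) * z))"
    by (intro lborel_integrable_real_affine) auto
  then show ?thesis by simp
qed

lemma kg_integral: "n > 0 \<Longrightarrow> (\<integral>z. kg n (p - z) \<partial>lborel) = 1"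
  using kg_subst[of n p "\<lambda>_. 1::real"] by simp

lemma approx_id:
  fixes \<rho> :: "real \<Rightarrow> 'a::{banach, second_countable_topology}"
  assumes meas: "\<rho> \<in> borel_measurable borel" and bnd: "\<And>x. norm (\<rho> x) \<le> M" and cont: "isCont \<rho> p"
  shows "(\<lambda>k. \<integral>z. kg (Suc k) (p - z) *\<^sub>R \<rho> z \<partial>lborel) \<longlonglongrightarrow> \<rho> p"
proof -
  have eq: "(\<integral>z. kg (Suc k) (p - z) *\<^sub>R \<rho> z \<partial>lborel) = (\<integral>v. std_normal_density v *\<^sub>R \<rho> (p + v/(2*pi*Suc k)) \<partial>lborel)" for k
    by (rule kg_subst) auto
  have "(\<lambda>k. \<integral>v. std_normal_density v *\<^sub>R \<rho> (p + v/(2*pi*Suc k)) \<partial>lborel) \<longlonglongrightarrow> (\<integral>v. std_normal_density v *\<^sub>R \<rho> p \<partial>lborel)"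
  proof (rule integral_dominated_convergence[where w="\<lambda>v. M * std_normal_density v"])
    show "(\<lambda>v. std_normal_density v *\<^sub>R \<rho> p) \<in> borel_measurable lborel" by measurable
    show "(\<lambda>v. std_normal_density v *\<^sub>R \<rho> (p + v / (2 * pi * real (Suc k)))) \<in> borel_measurable lborel" for k
      using meas by measurable
    show "integrable lborel (\<lambda>v. M * std_normal_density v)" by auto
    show "AE v in lborel. norm (std_normal_density v *\<^sub>R \<rho> (p + v / (2 * pi * real (Suc k)))) \<le> M * std_normal_density v" for k
      using bnd by (intro AE_I2) (simp add: mult.commute[of M] mult_left_mono)
    show "AE v in lborel. (\<lambda>k. std_normal_density v *\<^sub>R \<rho> (p + v / (2 * pi * real (Suc k)))) \<longlonglongrightarrow> std_normal_density v *\<^sub>R \<rho> p"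
    proof (intro AE_I2 tendsto_scaleR tendsto_const)
      fix v :: real
      have "(\<lambda>k. v / (2 * pi * real (Suc k))) \<longlonglongrightarrow> 0"
        by real_asymp
      then have "(\<lambda>k. p + v / (2 * pi * real (Suc k))) \<longlonglongrightarrow> p + 0"
        by (intro tendsto_add tendsto_const)
      then show "(\<lambda>k. \<rho> (p + v / (2 * pi * real (Suc k)))) \<longlonglongrightarrow> \<rho> p"
        using cont by (intro isCont_tendsto_compose[where g=\<rho>]) auto
    qed
  qed
  then show ?thesis unfolding eq by simp
qed


lemma borel_measurable_cis[measurable]: "cis \<in> borel_measurable borel"
proof -
  have "cis = (\<lambda>t. exp (\<i> * complex_of_real t))" by (simp add: cis_conv_exp fun_eq_iff)
  moreover have "(\<lambda>t. exp (\<i> * complex_of_real t)) \<in> borel_measurable borel"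
    by (intro borel_measurable_continuous_onI continuous_intros)
  ultimately show ?thesis by simp
qed

lemma fubini_fourier:
  fixes \<phi> q :: "real \<Rightarrow> complex"
  assumes phi: "integrable lborel \<phi>" and q: "integrable lborel q"
  shows "(\<integral>x. \<phi> x * (\<integral>\<xi>. q \<xi> * cis (2*pi*x*\<xi>) \<partial>lborel) \<partial>lborel)
       = (\<integral>\<xi>. q \<xi> * (\<integral>x. \<phi> x * cis (2*pi*x*\<xi>) \<partial>lborel) \<partial>lborel)"
proof -
  have [measurable]: "\<phi> \<in> borel_measurable borel" "q \<in> borel_measurable borel"
    using phi q by (auto dest: borel_measurable_integrable)
  let ?f = "\<lambda>x \<xi>. \<phi> x * q \<xi> * cis (2*pi*x*\<xi>)"
  have int: "integrable (lborel \<Otimes>\<^sub>M lborel) (case_prod ?f)"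
  proof (rule lborel_pair.Fubini_integrable)
    show "case_prod ?f \<in> borel_measurable (lborel \<Otimes>\<^sub>M lborel)" by measurable
    have "(\<lambda>x. \<integral>\<xi>. norm (case_prod ?f (x, \<xi>)) \<partial>lborel) = (\<lambda>x. norm (\<phi> x) * (\<integral>\<xi>. norm (q \<xi>) \<partial>lborel))"
      by (simp add: norm_mult)
    then show "integrable lborel (\<lambda>x. \<integral>\<xi>. norm (case_prod ?f (x, \<xi>)) \<partial>lborel)"
      using phi by (simp add: integrable_norm)
    show "AE x in lborel. integrable lborel (\<lambda>\<xi>. case_prod ?f (x, \<xi>))"
    proof (intro AE_I2)
      fix x
      show "integrable lborel (\<lambda>\<xi>. case_prod ?f (x, \<xi>))"
        by (rule Bochner_Integration.integrable_bound[where f="\<lambda>\<xi>. \<phi> x * q \<xi>"])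
           (auto intro!: integrable_mult_right q simp: norm_mult)
    qed
  qed
  have "(\<integral>x. \<phi> x * (\<integral>\<xi>. q \<xi> * cis (2*pi*x*\<xi>) \<partial>lborel) \<partial>lborel) = (\<integral>x. (\<integral>\<xi>. ?f x \<xi> \<partial>lborel) \<partial>lborel)"
    by (simp only: integral_mult_right_zero[symmetric] mult.assoc)
  also have "\<dots> = (\<integral>\<xi>. (\<integral>x. ?f x \<xi> \<partial>lborel) \<partial>lborel)"
    using lborel_pair.Fubini_integral[OF int] by simp
  also have "\<dots> = (\<integral>\<xi>. q \<xi> * (\<integral>x. \<phi> x * cis (2*pi*x*\<xi>) \<partial>lborel) \<partial>lborel)"
  proof (intro Bochner_Integration.integral_cong refl)
    fix \<xi>
    have "(\<integral>x. ?f x \<xi> \<partial>lborel) = (\<integral>x. q \<xi> * (\<phi> x * cis (2*pi*x*\<xi>)) \<partial>lborel)"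
      by (intro Bochner_Integration.integral_cong refl) (simp only: mult_ac)
    then show "(\<integral>x. ?f x \<xi> \<partial>lborel) = q \<xi> * (\<integral>x. \<phi> x * cis (2*pi*x*\<xi>) \<partial>lborel)"
      by (simp only: integral_mult_right_zero)
  qed
  finally show ?thesis .
qed


lemma kg_measurable[measurable]: "kg n \<in> borel_measurable borel"
  unfolding kg_def[abs_def] by (intro borel_measurable_continuous_onI continuous_intros)

lemma kg_le: "n > 0 \<Longrightarrow> kg n t \<le> n * sqrt (2*pi)"
proof -
  assume n: "n > 0"
  have "exp (-2*pi^2*n^2*t^2) \<le> 1" by simp
  then show ?thesis unfolding kg_def using n by (intro mult_left_le) auto
qed

lemma kg_swap: "kg n (a - b) = kg n (b - a)"
  unfolding kg_def by (simp add: power2_commute)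

lemma kg_integral': "n > 0 \<Longrightarrow> (\<integral>z. kg n (z - p) \<partial>lborel) = 1"
  using kg_integral[of n p] by (simp add: kg_swap)

lemma kg_integrable': "n > 0 \<Longrightarrow> integrable lborel (\<lambda>z. kg n (z - p))"
  using kg_integrable[of n p] by (simp add: kg_swap)
lemma schur:
  fixes G :: "real \<Rightarrow> real"
  assumes n: "n > 0" and Gm[measurable]: "G \<in> borel_measurable borel" and G0: "\<And>x. G x \<ge> 0"
    and Gi: "integrable lborel G" and G2: "integrable lborel (\<lambda>x. (G x)^2)"
  shows "integrable lborel (\<lambda>\<xi>. G \<xi> * (\<integral>\<eta>. G \<eta> * kg n (\<eta> - \<xi>) \<partial>lborel))"
    and "(\<integral>\<xi>. G \<xi> * (\<integral>\<eta>. G \<eta> * kg n (\<eta> - \<xi>) \<partial>lborel) \<partial>lborel) \<le> (\<integral>\<xi>. (G \<xi>)^2 \<partial>lborel)"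
proof -
  let ?K = "n * sqrt (2*pi)"
  have kgb: "\<bar>kg n t\<bar> \<le> ?K" for t using kg_le[OF n] kg_pos[OF n, of t] by simp
  have kgabs[simp]: "\<bar>kg n t\<bar> = kg n t" for t using kg_pos[OF n, of t] by simp
  have kgb1: "kg n t * G x \<le> ?K * G x" for t x using kgb G0 by (intro mult_right_mono) auto
  have kgb1': "G x * kg n t \<le> ?K * G x" for t x using kgb1[of t x] by (simp add: mult.commute)
  have kgb2: "kg n t * (G x)^2 \<le> ?K * (G x)^2" for t x using kgb by (intro mult_right_mono) auto
  have kgb2': "(G x)^2 * kg n t \<le> ?K * (G x)^2" for t x using kgb2[of t x] by (simp add: mult.commute)
  have intGk: "integrable lborel (\<lambda>\<eta>. G \<eta> * kg n (\<eta> - \<xi>))" for \<xi>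
    by (rule Bochner_Integration.integrable_bound[where f="\<lambda>\<eta>. ?K * G \<eta>"])
       (auto intro!: Gi integrable_mult_right AE_I2 simp: abs_mult G0 kgb1 kgb1' abs_of_pos[OF n])
  have intG2k: "integrable lborel (\<lambda>\<eta>. (G \<eta>)^2 * kg n (\<eta> - \<xi>))" for \<xi>
    by (rule Bochner_Integration.integrable_bound[where f="\<lambda>\<eta>. ?K * (G \<eta>)^2"])
       (auto intro!: G2 integrable_mult_right AE_I2 simp: abs_mult kgb2 kgb2' abs_of_pos[OF n])
  have Ab: "\<bar>\<integral>\<eta>. G \<eta> * kg n (\<eta> - \<xi>) \<partial>lborel\<bar> \<le> ?K * (\<integral>\<eta>. G \<eta> \<partial>lborel)" for \<xi>
  proof -
    have "\<bar>\<integral>\<eta>. G \<eta> * kg n (\<eta> - \<xi>) \<partial>lborel\<bar> \<le> (\<integral>\<eta>. \<bar>G \<eta> * kg n (\<eta> - \<xi>)\<bar> \<partial>lborel)"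
      by (rule integral_abs_bound)
    also have "\<dots> \<le> (\<integral>\<eta>. ?K * G \<eta> \<partial>lborel)"
      using intGk by (intro integral_mono) (auto intro!: Gi integrable_mult_right simp: abs_mult G0 kgb1 kgb1' abs_of_pos[OF n])
    finally show ?thesis by simp
  qed
  show int1: "integrable lborel (\<lambda>\<xi>. G \<xi> * (\<integral>\<eta>. G \<eta> * kg n (\<eta> - \<xi>) \<partial>lborel))"
    by (rule Bochner_Integration.integrable_bound[where f="\<lambda>\<xi>. (?K * (\<integral>\<eta>. G \<eta> \<partial>lborel)) * G \<xi>"])
       (auto intro!: Gi integrable_mult_right AE_I2 mult_left_mono Ab simp: abs_mult G0 abs_of_pos[OF n] mult.commute[of _ "G _"])
  let ?f = "\<lambda>(\<eta>, \<xi>). (G \<eta>)^2 * kg n (\<eta> - \<xi>)"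
  have intP: "integrable (lborel \<Otimes>\<^sub>M lborel) ?f"
  proof (rule lborel_pair.Fubini_integrable)
    show "?f \<in> borel_measurable (lborel \<Otimes>\<^sub>M lborel)" by measurable
    have "(\<integral>\<xi>. norm (?f (\<eta>, \<xi>)) \<partial>lborel) = (G \<eta>)^2" for \<eta>
    proof -
      have "(\<integral>\<xi>. norm (?f (\<eta>, \<xi>)) \<partial>lborel) = (\<integral>\<xi>. (G \<eta>)^2 * kg n (\<xi> - \<eta>) \<partial>lborel)"
        using kg_pos[OF n] by (intro Bochner_Integration.integral_cong refl) (simp add: abs_mult kg_swap)
      also have "\<dots> = (G \<eta>)^2" using kg_integral'[OF n] by simp
      finally show ?thesis .
    qed
    then show "integrable lborel (\<lambda>\<eta>. \<integral>\<xi>. norm (?f (\<eta>, \<xi>)) \<partial>lborel)" using G2 by simp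
    show "AE \<eta> in lborel. integrable lborel (\<lambda>\<xi>. ?f (\<eta>, \<xi>))"
    proof (intro AE_I2)
      fix \<eta>
      have "integrable lborel (\<lambda>\<xi>. (G \<eta>)^2 * kg n (\<xi> - \<eta>))"
        using kg_integrable'[OF n] by (intro integrable_mult_right)
      then show "integrable lborel (\<lambda>\<xi>. ?f (\<eta>, \<xi>))" by (simp add: kg_swap)
    qed
  qed
  have C_int: "integrable lborel (\<lambda>\<xi>. \<integral>\<eta>. (G \<eta>)^2 * kg n (\<eta> - \<xi>) \<partial>lborel)"
    using lborel_pair.integrable_snd[of "\<lambda>\<eta> \<xi>. (G \<eta>)^2 * kg n (\<eta> - \<xi>)"] intP by simp
  have C_eq: "(\<integral>\<xi>. (\<integral>\<eta>. (G \<eta>)^2 * kg n (\<eta> - \<xi>) \<partial>lborel) \<partial>lborel) = (\<integral>\<eta>. (G \<eta>)^2 \<partial>lborel)"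
  proof -
    have "(\<integral>\<xi>. (\<integral>\<eta>. (G \<eta>)^2 * kg n (\<eta> - \<xi>) \<partial>lborel) \<partial>lborel) = (\<integral>\<eta>. (\<integral>\<xi>. (G \<eta>)^2 * kg n (\<eta> - \<xi>) \<partial>lborel) \<partial>lborel)"
      using lborel_pair.Fubini_integral[of "\<lambda>\<eta> \<xi>. (G \<eta>)^2 * kg n (\<eta> - \<xi>)"] intP by simp
    also have "\<dots> = (\<integral>\<eta>. (G \<eta>)^2 \<partial>lborel)"
    proof (intro Bochner_Integration.integral_cong refl)
      fix \<eta>
      have "(\<integral>\<xi>. (G \<eta>)^2 * kg n (\<eta> - \<xi>) \<partial>lborel) = (\<integral>\<xi>. (G \<eta>)^2 * kg n (\<xi> - \<eta>) \<partial>lborel)"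
        by (simp add: kg_swap)
      then show "(\<integral>\<xi>. (G \<eta>)^2 * kg n (\<eta> - \<xi>) \<partial>lborel) = (G \<eta>)^2" using kg_integral'[OF n] by simp
    qed
    finally show ?thesis .
  qed
  have pw: "G \<xi> * (\<integral>\<eta>. G \<eta> * kg n (\<eta> - \<xi>) \<partial>lborel) \<le> (G \<xi>)^2 / 2 + (\<integral>\<eta>. (G \<eta>)^2 * kg n (\<eta> - \<xi>) \<partial>lborel) / 2" for \<xi>
  proof -
    have "G \<xi> * (\<integral>\<eta>. G \<eta> * kg n (\<eta> - \<xi>) \<partial>lborel) = (\<integral>\<eta>. G \<xi> * G \<eta> * kg n (\<eta> - \<xi>) \<partial>lborel)"
      by (simp add: mult.assoc)
    also have "\<dots> \<le> (\<integral>\<eta>. ((G \<xi>)^2 / 2) * kg n (\<eta> - \<xi>) + (G \<eta>)^2 * kg n (\<eta> - \<xi>) / 2 \<partial>lborel)"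
    proof (rule integral_mono)
      show "integrable lborel (\<lambda>\<eta>. G \<xi> * G \<eta> * kg n (\<eta> - \<xi>))"
        using intGk[of \<xi>] by (simp add: mult.assoc)
      show "integrable lborel (\<lambda>\<eta>. ((G \<xi>)^2 / 2) * kg n (\<eta> - \<xi>) + (G \<eta>)^2 * kg n (\<eta> - \<xi>) / 2)"
        using intG2k[of \<xi>] kg_integrable'[OF n, of \<xi>] by (intro Bochner_Integration.integrable_add integrable_mult_right integrable_divide) auto
      fix \<eta>
      have "G \<xi> * G \<eta> \<le> (G \<xi>)^2 / 2 + (G \<eta>)^2 / 2"
        using sum_squares_bound[of "G \<xi>" "G \<eta>"] by (simp add: power2_eq_square)
      then have "G \<xi> * G \<eta> * kg n (\<eta> - \<xi>) \<le> ((G \<xi>)^2 / 2 + (G \<eta>)^2 / 2) * kg n (\<eta> - \<xi>)"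
        using kg_pos[OF n] by (intro mult_right_mono) (auto intro: less_imp_le)
      then show "G \<xi> * G \<eta> * kg n (\<eta> - \<xi>) \<le> ((G \<xi>)^2 / 2) * kg n (\<eta> - \<xi>) + (G \<eta>)^2 * kg n (\<eta> - \<xi>) / 2"
        by (simp add: algebra_simps)
    qed
    also have "\<dots> = (G \<xi>)^2 / 2 * (\<integral>\<eta>. kg n (\<eta> - \<xi>) \<partial>lborel) + (\<integral>\<eta>. (G \<eta>)^2 * kg n (\<eta> - \<xi>) \<partial>lborel) / 2"
      using intG2k[of \<xi>] kg_integrable'[OF n, of \<xi>] by (subst Bochner_Integration.integral_add) auto
    finally show ?thesis using kg_integral'[OF n, of \<xi>] by simp
  qed
  have "(\<integral>\<xi>. G \<xi> * (\<integral>\<eta>. G \<eta> * kg n (\<eta> - \<xi>) \<partial>lborel) \<partial>lborel)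
      \<le> (\<integral>\<xi>. (G \<xi>)^2 / 2 + (\<integral>\<eta>. (G \<eta>)^2 * kg n (\<eta> - \<xi>) \<partial>lborel) / 2 \<partial>lborel)"
    using int1 G2 C_int pw by (intro integral_mono) auto
  also have "\<dots> = (\<integral>\<xi>. (G \<xi>)^2 \<partial>lborel)"
    using G2 C_int C_eq by (subst Bochner_Integration.integral_add) auto
  finally show "(\<integral>\<xi>. G \<xi> * (\<integral>\<eta>. G \<eta> * kg n (\<eta> - \<xi>) \<partial>lborel) \<partial>lborel) \<le> (\<integral>\<xi>. (G \<xi>)^2 \<partial>lborel)" .
qed


definition psi :: "real \<Rightarrow> real \<Rightarrow> real" where
  "psi n x = exp (-(x^2)/(2*n^2))"

lemma psi_pos: "psi n x > 0" by (simp add: psi_def)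
lemma psi_le1: "psi n x \<le> 1" by (simp add: psi_def)

lemma psi_ft: "n > 0 \<Longrightarrow> (\<integral>x. complex_of_real (psi n x) * cis (2*pi*x*t) \<partial>lborel) = complex_of_real (kg n t)"
  unfolding psi_def by (rule gauss_ft)
lemma psi_alt: "n > 0 \<Longrightarrow> psi n x = sqrt (2*pi) * std_normal_density (0 + (1/n) * x)"
  by (simp add: psi_def std_normal_density_def power_divide)
lemma psi_integrable: "n > 0 \<Longrightarrow> integrable lborel (psi n)"
proof -
  assume n: "n > 0"
  have "integrable lborel (\<lambda>x. std_normal_density (0 + (1/n) * x))"
    using n by (intro lborel_integrable_real_affine) auto
  then have "integrable lborel (\<lambda>x. sqrt (2*pi) * std_normal_density (0 + (1/n) * x))"
    by (intro integrable_mult_right)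
  moreover have "psi n = (\<lambda>x. sqrt (2*pi) * std_normal_density (0 + (1/n) * x))"
    by (rule ext) (rule psi_alt[OF n])
  ultimately show ?thesis by simp
qed
lemma psi_measurable[measurable]: "psi n \<in> borel_measurable borel"
  unfolding psi_def[abs_def] divide_inverse by (intro borel_measurable_continuous_onI continuous_intros)
lemma psi_lim: "(\<lambda>k. psi (Suc k) x) \<longlonglongrightarrow> 1"
proof -
  have "(\<lambda>k. -(x^2)/(2*(real (Suc k))^2)) \<longlonglongrightarrow> 0" by real_asymp
  then have "(\<lambda>k. exp (-(x^2)/(2*(real (Suc k))^2))) \<longlonglongrightarrow> exp 0" by (intro tendsto_exp)
  then show ?thesis by (simp add: psi_def)
qed
lemma cnj_measurable[measurable (raw)]:
  "f \<in> borel_measurable M \<Longrightarrow> (\<lambda>x. cnj (f x)) \<in> borel_measurable M"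
proof -
  assume f: "f \<in> borel_measurable M"
  have "(cnj :: complex \<Rightarrow> complex) \<in> borel_measurable borel"
    by (intro borel_measurable_continuous_onI continuous_intros)
  from measurable_compose[OF f this] show ?thesis by (simp add: o_def)
qed

lemma pw_L2:
  fixes gh :: "real \<Rightarrow> complex" and Fr :: "real \<Rightarrow> complex"
  assumes gm[measurable]: "gh \<in> borel_measurable borel" and gi: "integrable lborel gh"
    and g2: "integrable lborel (\<lambda>\<xi>. (cmod (gh \<xi>))^2)"
    and Fr_eq: "\<And>x. Fr x = (\<integral>\<xi>. gh \<xi> * cis (2*pi*x*\<xi>) \<partial>lborel)"
  shows "integrable lborel (\<lambda>x. (cmod (Fr x))^2)"
proof -
  have Fr_def: "Fr = (\<lambda>x. \<integral>\<xi>. gh \<xi> * cis (2*pi*x*\<xi>) \<partial>lborel)" using Fr_eq by auto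
  have Frm[measurable]: "Fr \<in> borel_measurable borel" unfolding Fr_def
    by (rule lborel.borel_measurable_lebesgue_integral) simp
  define B where "B = (\<integral>\<xi>. cmod (gh \<xi>) \<partial>lborel)"
  have Frb: "cmod (Fr x) \<le> B" for x
    unfolding Fr_eq B_def by (rule order_trans[OF integral_norm_bound]) (simp add: norm_mult)
  define Ng where "Ng = (\<integral>\<xi>. (cmod (gh \<xi>))^2 \<partial>lborel)"
  have key: "(\<integral>x. psi n x * (cmod (Fr x))^2 \<partial>lborel) \<le> Ng" if n: "n > 0" for n
  proof -
    have psi_int: "integrable lborel (psi n)" using psi_integrable[OF n] .
    have int_phi: "integrable lborel (\<lambda>x. complex_of_real (psi n x) * cnj (Fr x))"
    proof (rule Bochner_Integration.integrable_bound[where f="\<lambda>x. B * psi n x"])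
      show "integrable lborel (\<lambda>x. B * psi n x)" using psi_int by (rule integrable_mult_right)
      show "(\<lambda>x. complex_of_real (psi n x) * cnj (Fr x)) \<in> borel_measurable lborel" by measurable
      show "AE x in lborel. norm (complex_of_real (psi n x) * cnj (Fr x)) \<le> norm (B * psi n x)"
      proof (intro AE_I2)
        fix x
        have "psi n x * cmod (Fr x) \<le> psi n x * B" using Frb psi_pos[of n x] by (intro mult_left_mono) auto
        moreover have "B \<ge> 0" using Frb[of 0] norm_ge_zero order_trans by blast
        ultimately show "norm (complex_of_real (psi n x) * cnj (Fr x)) \<le> norm (B * psi n x)"
          using psi_pos[of n x] by (simp add: norm_mult abs_mult mult.commute)
      qed
    qed
    have inner: "(\<integral>x. (complex_of_real (psi n x) * cnj (Fr x)) * cis (2*pi*x*\<xi>) \<partial>lborel)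
        = cnj (\<integral>\<eta>. gh \<eta> * complex_of_real (kg n (\<eta> - \<xi>)) \<partial>lborel)" for \<xi>
    proof -
      have int_phi2: "integrable lborel (\<lambda>x. complex_of_real (psi n x) * cis (2*pi*x*(-\<xi>)))"
        by (rule Bochner_Integration.integrable_bound[where f="\<lambda>x. psi n x"])
           (auto intro!: psi_int AE_I2 simp: norm_mult psi_pos less_imp_le)
      have "(\<integral>x. (complex_of_real (psi n x) * cnj (Fr x)) * cis (2*pi*x*\<xi>) \<partial>lborel)
          = (\<integral>x. cnj ((complex_of_real (psi n x) * cis (2*pi*x*(-\<xi>))) * Fr x) \<partial>lborel)"
        by (intro Bochner_Integration.integral_cong refl) (simp add: cis_cnj)
      also have "\<dots> = cnj (\<integral>x. (complex_of_real (psi n x) * cis (2*pi*x*(-\<xi>))) * Fr x \<partial>lborel)"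
        by (rule Bochner_Integration.integral_cnj)
      also have "(\<integral>x. (complex_of_real (psi n x) * cis (2*pi*x*(-\<xi>))) * Fr x \<partial>lborel)
          = (\<integral>\<eta>. gh \<eta> * (\<integral>x. (complex_of_real (psi n x) * cis (2*pi*x*(-\<xi>))) * cis (2*pi*x*\<eta>) \<partial>lborel) \<partial>lborel)"
        unfolding Fr_eq by (rule fubini_fourier[OF int_phi2 gi])
      also have "\<dots> = (\<integral>\<eta>. gh \<eta> * complex_of_real (kg n (\<eta> - \<xi>)) \<partial>lborel)"
      proof (intro Bochner_Integration.integral_cong refl arg_cong2[where f="(*)"])
        fix \<eta>
        have "(\<integral>x. (complex_of_real (psi n x) * cis (2*pi*x*(-\<xi>))) * cis (2*pi*x*\<eta>) \<partial>lborel)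
            = (\<integral>x. complex_of_real (psi n x) * cis (2*pi*x*(\<eta> - \<xi>)) \<partial>lborel)"
          by (intro Bochner_Integration.integral_cong refl) (simp add: mult.assoc cis_mult algebra_simps)
        then show "(\<integral>x. (complex_of_real (psi n x) * cis (2*pi*x*(-\<xi>))) * cis (2*pi*x*\<eta>) \<partial>lborel)
            = complex_of_real (kg n (\<eta> - \<xi>))" using psi_ft[OF n] by simp
      qed
      finally show ?thesis .
    qed
    have "complex_of_real (\<integral>x. psi n x * (cmod (Fr x))^2 \<partial>lborel)
        = (\<integral>x. (complex_of_real (psi n x) * cnj (Fr x)) * Fr x \<partial>lborel)"
    proof -
      have "complex_of_real (\<integral>x. psi n x * (cmod (Fr x))^2 \<partial>lborel) = (\<integral>x. complex_of_real (psi n x * (cmod (Fr x))^2) \<partial>lborel)"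
        by (rule integral_complex_of_real[symmetric])
      also have "\<dots> = (\<integral>x. (complex_of_real (psi n x) * cnj (Fr x)) * Fr x \<partial>lborel)"
      proof (intro Bochner_Integration.integral_cong refl)
        fix x
        have "complex_of_real ((cmod (Fr x))^2) = Fr x * cnj (Fr x)" by (rule complex_norm_square)
        then show "complex_of_real (psi n x * (cmod (Fr x))^2) = (complex_of_real (psi n x) * cnj (Fr x)) * Fr x"
          by (simp only: of_real_mult mult_ac)
      qed
      finally show ?thesis .
    qed
    also have "\<dots> = (\<integral>\<xi>. gh \<xi> * (\<integral>x. (complex_of_real (psi n x) * cnj (Fr x)) * cis (2*pi*x*\<xi>) \<partial>lborel) \<partial>lborel)"
      unfolding Fr_eq[of "_"] by (subst fubini_fourier[OF _ gi]) (use int_phi Fr_eq in auto)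
    also have "\<dots> = (\<integral>\<xi>. gh \<xi> * cnj (\<integral>\<eta>. gh \<eta> * complex_of_real (kg n (\<eta> - \<xi>)) \<partial>lborel) \<partial>lborel)"
      by (simp add: inner)
    finally have V: "complex_of_real (\<integral>x. psi n x * (cmod (Fr x))^2 \<partial>lborel)
        = (\<integral>\<xi>. gh \<xi> * cnj (\<integral>\<eta>. gh \<eta> * complex_of_real (kg n (\<eta> - \<xi>)) \<partial>lborel) \<partial>lborel)" .
    have Gm: "(\<lambda>x. cmod (gh x)) \<in> borel_measurable borel" by measurable
    note S = schur[OF n Gm norm_ge_zero integrable_norm[OF gi] g2]
    have inb: "cmod (\<integral>\<eta>. gh \<eta> * complex_of_real (kg n (\<eta> - \<xi>)) \<partial>lborel) \<le> (\<integral>\<eta>. cmod (gh \<eta>) * kg n (\<eta> - \<xi>) \<partial>lborel)" for \<xi>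
      using integral_norm_bound[of lborel "\<lambda>\<eta>. gh \<eta> * complex_of_real (kg n (\<eta> - \<xi>))"]
      using kg_pos[OF n] by (simp add: norm_mult less_imp_le)
    have "(\<integral>x. psi n x * (cmod (Fr x))^2 \<partial>lborel) \<le> cmod (complex_of_real (\<integral>x. psi n x * (cmod (Fr x))^2 \<partial>lborel))"
      by simp
    also have "\<dots> \<le> (\<integral>\<xi>. cmod (gh \<xi> * cnj (\<integral>\<eta>. gh \<eta> * complex_of_real (kg n (\<eta> - \<xi>)) \<partial>lborel)) \<partial>lborel)"
      unfolding V by (rule integral_norm_bound)
    also have "\<dots> \<le> (\<integral>\<xi>. cmod (gh \<xi>) * (\<integral>\<eta>. cmod (gh \<eta>) * kg n (\<eta> - \<xi>) \<partial>lborel) \<partial>lborel)"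
    proof (rule integral_mono)
      show "integrable lborel (\<lambda>\<xi>. cmod (gh \<xi>) * (\<integral>\<eta>. cmod (gh \<eta>) * kg n (\<eta> - \<xi>) \<partial>lborel))"
        using S(1) by simp
      show "cmod (gh \<xi> * cnj (\<integral>\<eta>. gh \<eta> * complex_of_real (kg n (\<eta> - \<xi>)) \<partial>lborel)) \<le> cmod (gh \<xi>) * (\<integral>\<eta>. cmod (gh \<eta>) * kg n (\<eta> - \<xi>) \<partial>lborel)" for \<xi>
        unfolding norm_mult complex_mod_cnj by (intro mult_left_mono inb) auto
      show "integrable lborel (\<lambda>\<xi>. cmod (gh \<xi> * cnj (\<integral>\<eta>. gh \<eta> * complex_of_real (kg n (\<eta> - \<xi>)) \<partial>lborel)))"
      proof (rule Bochner_Integration.integrable_bound[OF S(1)])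
        show "(\<lambda>\<xi>. cmod (gh \<xi> * cnj (\<integral>\<eta>. gh \<eta> * complex_of_real (kg n (\<eta> - \<xi>)) \<partial>lborel))) \<in> borel_measurable lborel"
          by measurable
        show "AE \<xi> in lborel. norm (cmod (gh \<xi> * cnj (\<integral>\<eta>. gh \<eta> * complex_of_real (kg n (\<eta> - \<xi>)) \<partial>lborel)))
           \<le> norm (cmod (gh \<xi>) * (\<integral>\<eta>. cmod (gh \<eta>) * kg n (\<eta> - \<xi>) \<partial>lborel))"
        proof (intro AE_I2)
          fix \<xi>
          have "cmod (gh \<xi>) * cmod (\<integral>\<eta>. gh \<eta> * complex_of_real (kg n (\<eta> - \<xi>)) \<partial>lborel) \<le> cmod (gh \<xi>) * (\<integral>\<eta>. cmod (gh \<eta>) * kg n (\<eta> - \<xi>) \<partial>lborel)"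
            by (intro mult_left_mono inb) auto
          also have "\<dots> \<le> norm (cmod (gh \<xi>) * (\<integral>\<eta>. cmod (gh \<eta>) * kg n (\<eta> - \<xi>) \<partial>lborel))"
            by simp
          finally show "norm (cmod (gh \<xi> * cnj (\<integral>\<eta>. gh \<eta> * complex_of_real (kg n (\<eta> - \<xi>)) \<partial>lborel)))
           \<le> norm (cmod (gh \<xi>) * (\<integral>\<eta>. cmod (gh \<eta>) * kg n (\<eta> - \<xi>) \<partial>lborel))"
            by (simp add: norm_mult)
        qed
      qed
    qed
    also have "\<dots> \<le> Ng" unfolding Ng_def using S(2) by simp
    finally show ?thesis .
  qed
  have "(\<integral>\<^sup>+x. ennreal ((cmod (Fr x))^2) \<partial>lborel) = (\<integral>\<^sup>+x. liminf (\<lambda>k. ennreal (psi (Suc k) x * (cmod (Fr x))^2)) \<partial>lborel)"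
  proof (intro nn_integral_cong)
    fix x
    have "(\<lambda>k. psi (Suc k) x * (cmod (Fr x))^2) \<longlonglongrightarrow> 1 * (cmod (Fr x))^2"
      by (intro tendsto_mult psi_lim tendsto_const)
    then have "(\<lambda>k. ennreal (psi (Suc k) x * (cmod (Fr x))^2)) \<longlonglongrightarrow> ennreal ((cmod (Fr x))^2)"
      by (intro tendsto_ennrealI) simp
    then show "ennreal ((cmod (Fr x))^2) = liminf (\<lambda>k. ennreal (psi (Suc k) x * (cmod (Fr x))^2))"
      by (simp add: lim_imp_Liminf)
  qed
  also have "\<dots> \<le> liminf (\<lambda>k. \<integral>\<^sup>+x. ennreal (psi (Suc k) x * (cmod (Fr x))^2) \<partial>lborel)"
    by (intro nn_integral_liminf) simp
  also have "\<dots> \<le> ennreal Ng"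
  proof -
  have bk: "(\<integral>\<^sup>+x. ennreal (psi (Suc k) x * (cmod (Fr x))^2) \<partial>lborel) \<le> ennreal Ng" for k
  proof -
    have int: "integrable lborel (\<lambda>x. psi (Suc k) x * (cmod (Fr x))^2)"
      by (rule Bochner_Integration.integrable_bound[where f="\<lambda>x. B^2 * psi (Suc k) x"])
         (auto intro!: integrable_mult_right psi_integrable AE_I2 simp: abs_mult psi_pos less_imp_le
            mult.commute[of "B^2"] mult_left_mono power_mono Frb)
    have "(\<integral>\<^sup>+x. ennreal (psi (Suc k) x * (cmod (Fr x))^2) \<partial>lborel) = ennreal (\<integral>x. psi (Suc k) x * (cmod (Fr x))^2 \<partial>lborel)"
      using int by (intro nn_integral_eq_integral) (auto intro!: AE_I2 simp: psi_pos less_imp_le)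
    also have "\<dots> \<le> ennreal Ng" using key[of "Suc k"] by (intro ennreal_leI) simp
    finally show "(\<integral>\<^sup>+x. ennreal (psi (Suc k) x * (cmod (Fr x))^2) \<partial>lborel) \<le> ennreal Ng" .
  qed
  show ?thesis
  proof (rule order_trans[OF Liminf_le_Limsup Limsup_bounded])
    show "\<forall>\<^sub>F k in sequentially. (\<integral>\<^sup>+x. ennreal (psi (Suc k) x * (cmod (Fr x))^2) \<partial>lborel) \<le> ennreal Ng"
      by (intro always_eventually allI bk)
  qed simp
  qed
  finally have fin0: "(\<integral>\<^sup>+x. ennreal ((cmod (Fr x))^2) \<partial>lborel) \<le> ennreal Ng" .
  have fin: "(\<integral>\<^sup>+x. ennreal ((cmod (Fr x))^2) \<partial>lborel) < \<infinity>"
    by (rule le_less_trans[OF fin0]) simp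
  show ?thesis
  proof (rule integrableI_nonneg)
    show "(\<lambda>x. (cmod (Fr x))^2) \<in> borel_measurable lborel" by measurable
    show "AE x in lborel. 0 \<le> (cmod (Fr x))^2" by simp
    show "(\<integral>\<^sup>+x. ennreal ((cmod (Fr x))^2) \<partial>lborel) < \<infinity>" by (rule fin)
  qed
qed


lemma even_ft:
  fixes f :: "real \<Rightarrow> real"
  assumes fi: "integrable lborel f" and ev: "\<And>x. f (-x) = f x"
  shows "(\<integral>z. complex_of_real (f z) * cis (2*pi*x*z) \<partial>lborel) = complex_of_real (\<integral>z. f z * cos (2*pi*x*z) \<partial>lborel)"
proof -
  have fm[measurable]: "f \<in> borel_measurable borel" using borel_measurable_integrable[OF fi] by simp
  have ic: "integrable lborel (\<lambda>z. f z * cos (2*pi*x*z))"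
    by (rule Bochner_Integration.integrable_bound[OF fi]) (auto simp: abs_mult intro!: AE_I2 mult_left_le)
  have isn: "integrable lborel (\<lambda>z. f z * sin (2*pi*x*z))"
    by (rule Bochner_Integration.integrable_bound[OF fi]) (auto simp: abs_mult intro!: AE_I2 mult_left_le)
  define I where "I = (\<integral>z. f z * sin (2*pi*x*z) \<partial>lborel)"
  have "I = \<bar>-1\<bar> *\<^sub>R (\<integral>z. f (0 + (-1) * z) * sin (2*pi*x*(0 + (-1) * z)) \<partial>lborel)"
    unfolding I_def by (rule lborel_integral_real_affine) simp
  also have "\<dots> = (\<integral>z. - (f z * sin (2*pi*x*z)) \<partial>lborel)" by (simp add: ev)
  also have "\<dots> = - I" unfolding I_def by (rule Bochner_Integration.integral_minus)
  finally have I0: "I = 0" by simp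
  have "(\<integral>z. complex_of_real (f z) * cis (2*pi*x*z) \<partial>lborel)
      = (\<integral>z. complex_of_real (f z * cos (2*pi*x*z)) + \<i> * complex_of_real (f z * sin (2*pi*x*z)) \<partial>lborel)"
    by (intro Bochner_Integration.integral_cong refl) (simp add: cis.ctr complex_eq_iff)
  also have "\<dots> = complex_of_real (\<integral>z. f z * cos (2*pi*x*z) \<partial>lborel) + \<i> * complex_of_real I"
  proof -
    have c1: "complex_integrable lborel (\<lambda>z. complex_of_real (f z * cos (2*pi*x*z)))" using ic by (rule integrable_of_real)
    have c2: "complex_integrable lborel (\<lambda>z. \<i> * complex_of_real (f z * sin (2*pi*x*z)))"
      using isn by (intro integrable_mult_right integrable_of_real)
    show ?thesis unfolding I_def
      by (simp only: Bochner_Integration.integral_add[OF c1 c2] integral_mult_right_zero integral_complex_of_real)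
  qed
  finally show ?thesis using I0 by simp
qed

lemma lborel_FTC:
  fixes f P :: "real \<Rightarrow> real"
  assumes ab: "a \<le> b" and P: "\<And>x. (P has_real_derivative f x) (at x)" and f: "continuous_on {a..b} f"
  shows "(\<integral>x. indicator {a..b} x * f x \<partial>lborel) = P b - P a"
proof -
  have "(\<integral>x. indicator {a..b} x *\<^sub>R f x \<partial>lborel) = P b - P a"
    using ab f
    by (intro integral_FTC_atLeastAtMost)
       (auto simp: has_real_derivative_iff_has_vector_derivative[symmetric] intro: has_field_derivative_at_within P)
  then show ?thesis by simp
qed

lemma lborel_split:
  fixes f :: "real \<Rightarrow> real"
  assumes "a \<le> c" "c \<le> b" and f: "continuous_on {a..b} f"
  shows "(\<integral>x. indicator {a..b} x * f x \<partial>lborel) = (\<integral>x. indicator {a..c} x * f x \<partial>lborel) + (\<integral>x. indicator {c..b} x * f x \<partial>lborel)"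
proof -
  have fac: "continuous_on {a..c} f" and fcb: "continuous_on {c..b} f"
    using assms by (auto intro: continuous_on_subset[OF f])
  have eq: "(\<integral>x. indicator {p..q} x * f x \<partial>lborel) = integral {p..q} f" if "continuous_on {p..q} f" for p q
  proof -
    have si: "set_integrable lborel {p..q} f"
      unfolding set_integrable_def using that by (intro borel_integrable_compact) auto
    have "(\<integral>x. indicator {p..q} x * f x \<partial>lborel) = (LINT x:{p..q}|lborel. f x)"
      by (simp add: set_lebesgue_integral_def)
    also have "\<dots> = integral {p..q} f" by (rule set_borel_integral_eq_integral(2)[OF si])
    finally show ?thesis .
  qed
  show ?thesis
    unfolding eq[OF f] eq[OF fac] eq[OF fcb]
    using assms by (intro Henstock_Kurzweil_Integration.integral_combine[symmetric] integrable_continuous_interval) auto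
qed

definition sc :: "real \<Rightarrow> real \<Rightarrow> real" where
  "sc b z = (if b = 0 then z else sin (b*z) / b)"
definition cc :: "real \<Rightarrow> real \<Rightarrow> real" where
  "cc b z = (if b = 0 then z^2/2 else (1 - cos (b*z)) / b^2)"

lemma sc_deriv: "(sc b has_real_derivative cos (b*z)) (at z)"
proof (cases "b = 0")
  case True
  then show ?thesis unfolding sc_def[abs_def] by (auto intro!: derivative_eq_intros)
next
  case False
  then have "((\<lambda>z. sin (b*z) / b) has_real_derivative cos (b*z)) (at z)"
    by (auto intro!: derivative_eq_intros)
  then show ?thesis using False unfolding sc_def[abs_def] by simp
qed

lemma cc_deriv: "(cc b has_real_derivative sc b z) (at z)"
proof (cases "b = 0")
  case True
  then show ?thesis unfolding cc_def[abs_def] sc_def by (auto intro!: derivative_eq_intros)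
next
  case False
  then have "((\<lambda>z. (1 - cos (b*z)) / b^2) has_real_derivative sin (b*z) / b) (at z)"
    by (auto intro!: derivative_eq_intros simp: power2_eq_square)
  then show ?thesis using False unfolding cc_def[abs_def] sc_def by simp
qed

lemma sc_0[simp]: "sc b 0 = 0" and cc_0[simp]: "cc b 0 = 0"
  by (simp_all add: sc_def cc_def)
lemma sc_odd: "sc b (-z) = - sc b z" by (simp add: sc_def)
lemma cc_even: "cc b (-z) = cc b z" by (simp add: cc_def)

definition Lam :: "real \<Rightarrow> real" where "Lam z = max 0 (1 - \<bar>z\<bar>)"

lemma Lam_cont: "continuous_on S Lam" unfolding Lam_def[abs_def] by (intro continuous_intros)
lemma Lam_measurable[measurable]: "Lam \<in> borel_measurable borel"
  by (intro borel_measurable_continuous_onI Lam_cont)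
lemma Lam_eq: "Lam z = indicator {-1..1} z * (1 - \<bar>z\<bar>)"
  by (auto simp: Lam_def indicator_def)
lemma Lam_nonneg: "Lam z \<ge> 0" and Lam_le1: "Lam z \<le> 1" by (auto simp: Lam_def)
lemma Lam_even: "Lam (-z) = Lam z" by (simp add: Lam_def)

lemma Lam_integrable: "integrable lborel Lam"
proof -
  have "integrable lborel (\<lambda>z. indicator {-1..1::real} z *\<^sub>R (1 - \<bar>z\<bar>))"
    by (intro borel_integrable_compact) (auto intro!: continuous_intros)
  then show ?thesis by (simp add: Lam_eq[abs_def])
qed

lemma Lam_cos_integral: "(\<integral>z. Lam z * cos (b*z) \<partial>lborel) = 2 * cc b 1"
proof -
  have "(\<integral>z. Lam z * cos (b*z) \<partial>lborel) = (\<integral>z. indicator {-1..1} z * ((1 - \<bar>z\<bar>) * cos (b*z)) \<partial>lborel)"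
    by (simp add: Lam_eq mult.assoc)
  also have "\<dots> = (\<integral>z. indicator {-1..0} z * ((1 - \<bar>z\<bar>) * cos (b*z)) \<partial>lborel) + (\<integral>z. indicator {0..1} z * ((1 - \<bar>z\<bar>) * cos (b*z)) \<partial>lborel)"
    by (rule lborel_split) (auto intro!: continuous_intros)
  also have "(\<integral>z. indicator {-1..0} z * ((1 - \<bar>z\<bar>) * cos (b*z)) \<partial>lborel) = (\<integral>z. indicator {-1..0} z * ((1 + z) * cos (b*z)) \<partial>lborel)"
    by (intro Bochner_Integration.integral_cong refl) (auto simp: indicator_def)
  also have "\<dots> = ((1 + 0) * sc b 0 - cc b 0) - ((1 + -1) * sc b (-1) - cc b (-1))"
    by (rule lborel_FTC) (auto intro!: derivative_eq_intros sc_deriv cc_deriv continuous_intros simp: algebra_simps)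
  also have "(\<integral>z. indicator {0..1} z * ((1 - \<bar>z\<bar>) * cos (b*z)) \<partial>lborel) = (\<integral>z. indicator {0..1} z * ((1 - z) * cos (b*z)) \<partial>lborel)"
    by (intro Bochner_Integration.integral_cong refl) (auto simp: indicator_def)
  also have "\<dots> = ((1 - 1) * sc b 1 + cc b 1) - ((1 - 0) * sc b 0 + cc b 0)"
    by (rule lborel_FTC) (auto intro!: derivative_eq_intros sc_deriv cc_deriv continuous_intros simp: algebra_simps)
  finally show ?thesis by (simp add: cc_even)
qed

lemma sinc_sq_cc: "2 * cc (2*pi*x) 1 = (Defs.sinc x)^2"
proof (cases "x = 0")
  case True then show ?thesis by (simp add: cc_def Defs.sinc_def)
next
  case False
  have c: "cos (2*pi*x) = 1 - 2*(sin (pi*x))^2" using cos_double_sin[of "pi*x"] by (simp add: mult.assoc)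
  have c': "cos (pi*(x*2)) = 1 - 2*(sin (pi*x))^2" using c by (simp add: mult_ac)
  show ?thesis using False by (simp add: cc_def Defs.sinc_def c c' power_divide power_mult_distrib field_simps)
qed

lemma sinc_sq_ft: "complex_of_real ((Defs.sinc x)^2) = (\<integral>z. complex_of_real (Lam z) * cis (2*pi*x*z) \<partial>lborel)"
  using even_ft[OF Lam_integrable Lam_even, of x] Lam_cos_integral[of "2*pi*x"] sinc_sq_cc[of x] by simp

lemma Lam_integral: "(\<integral>z. Lam z \<partial>lborel) = 1"
  using Lam_cos_integral[of 0] by (simp add: cc_def)


lemma exp_cis: "exp (2 * complex_of_real pi * \<i> * complex_of_real x * complex_of_real z) = cis (2*pi*x*z)"
  by (simp add: cis_conv_exp mult_ac)

lemma pw_repr: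
  assumes "F \<in> PW a"
  obtains gh :: "real \<Rightarrow> complex" where "gh \<in> borel_measurable borel" "integrable lborel gh"
    "integrable lborel (\<lambda>z. (cmod (gh z))^2)" "\<And>z. z \<notin> {-a..a} \<Longrightarrow> gh z = 0"
    "\<And>x. F (complex_of_real x) = (\<integral>z. gh z * cis (2*pi*x*z) \<partial>lborel)"
proof -
  from assms obtain g :: "real \<Rightarrow> complex" where gm[measurable]: "g \<in> borel_measurable lborel"
    and g2: "set_integrable lborel {-a..a} (\<lambda>z. (cmod (g z))^2)"
    and Fw: "\<And>w. F w = set_lebesgue_integral lborel {-a..a} (\<lambda>z. g z * exp (2 * of_real pi * \<i> * w * of_real z))"
    unfolding PW_def by auto
  define gh where "gh z = indicator {-a..a} z *\<^sub>R g z" for z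
  have ghm: "gh \<in> borel_measurable borel" unfolding gh_def[abs_def] using gm by simp
  have gh2: "integrable lborel (\<lambda>z. (cmod (gh z))^2)"
  proof -
    have "(\<lambda>z. (cmod (gh z))^2) = (\<lambda>z. indicator {-a..a} z *\<^sub>R (cmod (g z))^2)"
      by (auto simp: gh_def indicator_def fun_eq_iff)
    then show ?thesis using g2 unfolding set_integrable_def by simp
  qed
  have ind: "integrable lborel (\<lambda>z. indicator {-a..a} z :: real)"
    using borel_integrable_compact[of "{-a..a}" "\<lambda>_. 1::real"] by simp
  have ghi: "integrable lborel gh"
  proof (rule Bochner_Integration.integrable_bound[where f="\<lambda>z. indicator {-a..a} z + (cmod (gh z))^2"])
    show "integrable lborel (\<lambda>z. indicator {-a..a} z + (cmod (gh z))^2)" using ind gh2 by simp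
    show "gh \<in> borel_measurable lborel" using ghm by simp
    show "AE z in lborel. norm (gh z) \<le> norm (indicator {-a..a} z + (cmod (gh z))^2)"
    proof (intro AE_I2)
      fix z
      have "0 \<le> (cmod (g z) - 1)^2" by simp
      then have "0 \<le> cmod (g z) * cmod (g z) - 2 * cmod (g z) + 1" by (simp add: power2_eq_square algebra_simps)
      moreover have "0 \<le> cmod (g z) * cmod (g z)" by simp
      ultimately have "cmod (g z) \<le> 1 + (cmod (g z))^2" unfolding power2_eq_square by linarith
      then show "norm (gh z) \<le> norm (indicator {-a..a} z + (cmod (gh z))^2)"
        by (auto simp: gh_def indicator_def)
    qed
  qed
  have "F (complex_of_real x) = (\<integral>z. gh z * cis (2*pi*x*z) \<partial>lborel)" for x
    unfolding Fw set_lebesgue_integral_def gh_def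
    by (intro Bochner_Integration.integral_cong refl) (simp add: exp_cis)
  moreover have "z \<notin> {-a..a} \<Longrightarrow> gh z = 0" for z by (simp add: gh_def)
  ultimately show ?thesis using that ghm ghi gh2 by blast
qed

definition tt :: "real \<Rightarrow> real" where "tt m = 1 / (sqrt 2 * m)"
definition DD :: "real \<Rightarrow> real" where "DD m = - sqrt 2 * sin (tt m) + tt m * sin (tt m) + cos (tt m)"
definition hh :: "real \<Rightarrow> real \<Rightarrow> real" where "hh m z = cos (sqrt 2 * z) / DD m"
definition HH :: "real \<Rightarrow> real \<Rightarrow> real" where "HH m z = indicator {-(1/(2*m))..1/(2*m)} z * hh m z"
definition Gc :: "real \<Rightarrow> complex \<Rightarrow> complex" where
  "Gc m w = set_lebesgue_integral lborel {-(1/(2*m))..1/(2*m)} (\<lambda>z. complex_of_real (hh m z) * exp (2 * of_real pi * \<i> * w * of_real z))"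
definition Gr :: "real \<Rightarrow> real \<Rightarrow> real" where "Gr m x = s_plus (u_m m) (x/m) / (m * DD m)"

lemma cos_lower: "1 - x^2/2 \<le> cos (x::real)"
proof -
  have "cos x = cos (2 * (x/2))" by simp
  also have "\<dots> = 1 - 2 * (sin (x/2))^2" by (rule cos_double_sin)
  finally have c: "cos x = 1 - 2 * (sin (x/2))^2" .
  have "(sin (x/2))^2 \<le> (x/2)^2"
    using abs_sin_x_le_abs_x[of "x/2"] by (metis abs_le_square_iff)
  then show ?thesis unfolding c by (simp add: power_divide)
qed

lemma DD_pos: assumes m: "m \<ge> 1" shows "DD m > 0"
proof -
  define t where "t = tt m"
  have s2: "sqrt 2 * sqrt 2 = (2::real)" by simp
  have t0: "t > 0" using m by (simp add: t_def tt_def)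
  have tle: "t * sqrt 2 \<le> 1" using m unfolding t_def tt_def by (simp add: field_simps)
  have tle2: "t \<le> 1" using tle by (smt (verit) mult_le_cancel_left1 real_sqrt_ge_one t0)
  have st: "sin t \<le> t" using t0 by (intro sin_x_le_x) simp
  have s0: "sin t \<ge> 0" using t0 tle2 pi_gt3 by (intro sin_ge_zero) auto
  have sq: "t < sqrt 2" using tle2 by (smt (verit) real_sqrt_gt_1_iff)
  have "(sqrt 2 - t) * sin t \<le> (sqrt 2 - t) * t" using sq st by (intro mult_left_mono) auto
  moreover have "1 - t^2/2 \<le> cos t" by (rule cos_lower)
  ultimately have "DD m \<ge> 1 - t^2/2 - (sqrt 2 - t) * t" unfolding DD_def t_def[symmetric] by (simp add: algebra_simps)
  moreover have "1 - t^2/2 - (sqrt 2 - t) * t = (1 - t * sqrt 2 / 2)^2"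
    by (simp add: power2_eq_square algebra_simps s2)
  moreover have "(1 - t * sqrt 2 / 2)^2 > 0" using tle by simp
  ultimately show ?thesis by linarith
qed

lemma hh_cont: "continuous_on S (hh m)" unfolding hh_def[abs_def] divide_inverse by (intro continuous_intros)
lemma hh_measurable[measurable]: "hh m \<in> borel_measurable borel" by (rule borel_measurable_continuous_onI[OF hh_cont])
lemma hh_even: "hh m (-z) = hh m z" by (simp add: hh_def)
lemma HH_even: "HH m (-z) = HH m z" by (auto simp: HH_def hh_even indicator_def)
lemma HH_measurable[measurable]: "HH m \<in> borel_measurable borel"
  unfolding HH_def[abs_def] by (intro borel_measurable_times borel_measurable_indicator borel_measurable_continuous_onI hh_cont) auto
lemma HH_integrable: "integrable lborel (HH m)"
  using borel_integrable_compact[of "{-(1/(2*m))..1/(2*m)}" "hh m"] hh_cont unfolding HH_def[abs_def] by simp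

lemma Gc_PW: "Gc m \<in> PW (1/(2*m))"
  unfolding PW_def
proof (intro CollectI exI conjI allI)
  show "(\<lambda>z. complex_of_real (hh m z)) \<in> borel_measurable lborel"
    by measurable
  show "set_integrable lborel {- (1 / (2 * m))..1 / (2 * m)} (\<lambda>z. (cmod (complex_of_real (hh m z)))\<^sup>2)"
    unfolding set_integrable_def by (intro borel_integrable_compact) (auto intro!: continuous_intros hh_cont)
  show "Gc m w = set_lebesgue_integral lborel {- (1 / (2 * m))..1 / (2 * m)} (\<lambda>z. complex_of_real (hh m z) * exp (2 * of_real pi * \<i> * w * of_real z))" for w
    by (simp add: Gc_def)
qed

lemma Gc_repr: "Gc m (complex_of_real x) = (\<integral>z. complex_of_real (HH m z) * cis (2*pi*x*z) \<partial>lborel)"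
  unfolding Gc_def set_lebesgue_integral_def HH_def
  by (intro Bochner_Integration.integral_cong refl) (simp add: exp_cis indicator_def)
lemma sc_sinc: "a > 0 \<Longrightarrow> sc b a = a * Defs.sinc (b*a/pi)"
  by (auto simp: sc_def Defs.sinc_def field_simps)

lemma HH_cos_integral:
  assumes m: "m > 0"
  shows "(\<integral>z. HH m z * cos (2*pi*x*z) \<partial>lborel) = (sc (sqrt 2 + 2*pi*x) (1/(2*m)) + sc (sqrt 2 - 2*pi*x) (1/(2*m))) / DD m"
proof -
  define a where "a = 1/(2*m)"
  define P where "P z = (sc (sqrt 2 + 2*pi*x) z + sc (sqrt 2 - 2*pi*x) z) / (2 * DD m)" for z
  have "(\<integral>z. HH m z * cos (2*pi*x*z) \<partial>lborel) = (\<integral>z. indicator {-a..a} z * (hh m z * cos (2*pi*x*z)) \<partial>lborel)"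
    by (simp add: HH_def a_def mult.assoc)
  also have "\<dots> = P a - P (-a)"
  proof -
    have True: "a \<ge> 0" using m by (simp add: a_def)
    show ?thesis
    proof (rule lborel_FTC)
      show "-a \<le> a" using True by simp
      show "continuous_on {-a..a} (\<lambda>z. hh m z * cos (2*pi*x*z))"
        by (intro continuous_on_mult hh_cont continuous_intros)
      fix z
      have "(P has_real_derivative (cos ((sqrt 2 + 2*pi*x)*z) + cos ((sqrt 2 - 2*pi*x)*z)) / (2 * DD m)) (at z)"
      proof -
        have "((\<lambda>z. sc (sqrt 2 + 2*pi*x) z + sc (sqrt 2 - 2*pi*x) z) has_real_derivative cos ((sqrt 2 + 2*pi*x)*z) + cos ((sqrt 2 - 2*pi*x)*z)) (at z)"
          by (intro DERIV_add sc_deriv)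
        then show ?thesis unfolding P_def[abs_def] by (rule DERIV_cdivide)
      qed
      moreover have "(cos ((sqrt 2 + 2*pi*x)*z) + cos ((sqrt 2 - 2*pi*x)*z)) / (2 * DD m) = hh m z * cos (2*pi*x*z)"
        by (simp add: hh_def distrib_right left_diff_distrib cos_add cos_diff)
      ultimately show "(P has_real_derivative hh m z * cos (2*pi*x*z)) (at z)" by simp
    qed
  qed
  also have "P a - P (-a) = (sc (sqrt 2 + 2*pi*x) a + sc (sqrt 2 - 2*pi*x) a) / DD m"
  proof -
    have aux: "u / (2*d) - (- u) / (2*d) = u / d" for u d :: real by (cases "d = 0") (auto simp: field_simps)
    show ?thesis unfolding P_def sc_odd using aux[of "sc (sqrt 2 + 2*pi*x) a + sc (sqrt 2 - 2*pi*x) a" "DD m"]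
      by (simp only: minus_add_distrib diff_conv_add_uminus)
  qed
  finally show ?thesis unfolding a_def .
qed
lemma u_alt: "m > 0 \<Longrightarrow> u_m m = sqrt 2 / (2*pi*m)"
proof -
  assume m: "m > 0"
  have s2: "sqrt 2 * sqrt 2 = (2::real)" by simp
  have "1 / (pi * m * sqrt 2) = (sqrt 2 * sqrt 2) / (2 * (pi * m * sqrt 2))" using s2 by simp
  also have "\<dots> = sqrt 2 / (2*pi*m)" using m by (simp add: field_simps)
  finally show ?thesis unfolding u_m_def .
qed

lemma Gr_repr:
  assumes m: "m > 0"
  shows "(\<integral>z. complex_of_real (HH m z) * cis (2*pi*x*z) \<partial>lborel) = complex_of_real (Gr m x)"
proof -
  have "(\<integral>z. complex_of_real (HH m z) * cis (2*pi*x*z) \<partial>lborel) = complex_of_real (\<integral>z. HH m z * cos (2*pi*x*z) \<partial>lborel)"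
    by (rule even_ft[OF HH_integrable HH_even])
  also have "(\<integral>z. HH m z * cos (2*pi*x*z) \<partial>lborel) = (sc (sqrt 2 + 2*pi*x) (1/(2*m)) + sc (sqrt 2 - 2*pi*x) (1/(2*m))) / DD m"
    by (rule HH_cos_integral[OF m])
  also have "sc (sqrt 2 + 2*pi*x) (1/(2*m)) = 1/(2*m) * Defs.sinc (u_m m + x/m)"
    using m by (subst sc_sinc) (auto simp: u_alt field_simps)
  also have "sc (sqrt 2 - 2*pi*x) (1/(2*m)) = 1/(2*m) * Defs.sinc (u_m m - x/m)"
    using m by (subst sc_sinc) (auto simp: u_alt field_simps)
  also have "(1/(2*m) * Defs.sinc (u_m m + x/m) + 1/(2*m) * Defs.sinc (u_m m - x/m)) / DD m = Gr m x"
    using m by (simp add: Gr_def s_plus_def field_simps)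
  finally show ?thesis .
qed
lemma HH_identity:
  assumes m: "m \<ge> 1" and xi: "\<bar>\<xi>\<bar> < 1/(2*m)"
  shows "HH m (-\<xi>) - (\<integral>z. Lam z * HH m (-\<xi> - z) \<partial>lborel) = 1"
proof -
  define a where "a = 1/(2*m)"
  define c where "c = sqrt (2::real)"
  define D where "D = DD m"
  have c2: "c * c = 2" and c0: "c > 0" by (simp_all add: c_def)
  have D0: "D > 0" using DD_pos[OF m] by (simp add: D_def)
  have a0: "a > 0" and a1: "2 * a \<le> 1" using m by (auto simp: a_def field_simps)
  have hh_eq: "hh m z = cos (c*z) / D" for z by (simp add: hh_def c_def D_def)
  have "(\<integral>z. Lam z * HH m (-\<xi> - z) \<partial>lborel) = \<bar>-1\<bar> *\<^sub>R (\<integral>z. Lam (-\<xi> + (-1) * z) * HH m (-\<xi> - (-\<xi> + (-1) * z)) \<partial>lborel)"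
    by (rule lborel_integral_real_affine) simp
  also have "\<dots> = (\<integral>z. indicator {-a..a} z * (cos (c*z) / D * (1 - \<bar>\<xi> + z\<bar>)) \<partial>lborel)"
  proof -
    have "Lam (-\<xi> + (-1) * z) * HH m (-\<xi> - (-\<xi> + (-1) * z)) = indicator {-a..a} z * (cos (c*z) / D * (1 - \<bar>\<xi> + z\<bar>))" for z
    proof (cases "z \<in> {-a..a}")
      case True
      then have "\<bar>\<xi> + z\<bar> \<le> 1" using xi a1 by (auto simp: a_def)
      then have "Lam (-\<xi> + (-1) * z) = 1 - \<bar>\<xi> + z\<bar>" by (auto simp: Lam_def abs_minus_commute)
      then show ?thesis using True by (simp add: HH_def a_def hh_eq)
    next
      case False
      then show ?thesis by (simp add: HH_def a_def)
    qed
    then show ?thesis by simp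
  qed
  also have "\<dots> = (\<integral>z. indicator {-a..-\<xi>} z * (cos (c*z) / D * (1 - \<bar>\<xi> + z\<bar>)) \<partial>lborel)
                   + (\<integral>z. indicator {-\<xi>..a} z * (cos (c*z) / D * (1 - \<bar>\<xi> + z\<bar>)) \<partial>lborel)"
  proof -
    have "-a \<le> -\<xi>" "-\<xi> \<le> a" using xi by (auto simp: a_def)
    then show ?thesis unfolding divide_inverse by (intro lborel_split) (auto intro!: continuous_intros)
  qed
  also have "(\<integral>z. indicator {-a..-\<xi>} z * (cos (c*z) / D * (1 - \<bar>\<xi> + z\<bar>)) \<partial>lborel)
      = (\<integral>z. indicator {-a..-\<xi>} z * (cos (c*z) / D * (1 + \<xi> + z)) \<partial>lborel)"
    by (intro Bochner_Integration.integral_cong refl) (auto simp: indicator_def)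
  also have "\<dots> = ((1 + \<xi> + (-\<xi>)) * sin (c*(-\<xi>)) / c + cos (c*(-\<xi>)) / (c*c)) / D - ((1 + \<xi> + (-a)) * sin (c*(-a)) / c + cos (c*(-a)) / (c*c)) / D"
  proof (rule lborel_FTC)
    show "-a \<le> -\<xi>" using xi by (simp add: a_def)
    show "continuous_on {-a..-\<xi>} (\<lambda>z. cos (c*z) / D * (1 + \<xi> + z))"
      unfolding divide_inverse by (intro continuous_intros)
    fix z
    show "((\<lambda>z. ((1 + \<xi> + z) * sin (c*z) / c + cos (c*z) / (c*c)) / D) has_real_derivative cos (c*z) / D * (1 + \<xi> + z)) (at z)"
      using c0 D0 by (auto intro!: derivative_eq_intros simp: field_simps)
  qed
  also have "(\<integral>z. indicator {-\<xi>..a} z * (cos (c*z) / D * (1 - \<bar>\<xi> + z\<bar>)) \<partial>lborel)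
      = (\<integral>z. indicator {-\<xi>..a} z * (cos (c*z) / D * (1 - \<xi> - z)) \<partial>lborel)"
    by (intro Bochner_Integration.integral_cong refl) (auto simp: indicator_def)
  also have "\<dots> = ((1 - \<xi> - a) * sin (c*a) / c - cos (c*a) / (c*c)) / D - ((1 - \<xi> - (-\<xi>)) * sin (c*(-\<xi>)) / c - cos (c*(-\<xi>)) / (c*c)) / D"
  proof (rule lborel_FTC)
    show "-\<xi> \<le> a" using xi by (simp add: a_def)
    show "continuous_on {-\<xi>..a} (\<lambda>z. cos (c*z) / D * (1 - \<xi> - z))"
      unfolding divide_inverse by (intro continuous_intros)
    fix z
    show "((\<lambda>z. ((1 - \<xi> - z) * sin (c*z) / c - cos (c*z) / (c*c)) / D) has_real_derivative cos (c*z) / D * (1 - \<xi> - z)) (at z)"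
      using c0 D0 by (auto intro!: derivative_eq_intros simp: field_simps)
  qed
  finally have I: "(\<integral>z. Lam z * HH m (-\<xi> - z) \<partial>lborel) =
      ((1 + \<xi> + (-\<xi>)) * sin (c*(-\<xi>)) / c + cos (c*(-\<xi>)) / (c*c)) / D - ((1 + \<xi> + (-a)) * sin (c*(-a)) / c + cos (c*(-a)) / (c*c)) / D
      + (((1 - \<xi> - a) * sin (c*a) / c - cos (c*a) / (c*c)) / D - ((1 - \<xi> - (-\<xi>)) * sin (c*(-\<xi>)) / c - cos (c*(-\<xi>)) / (c*c)) / D)" by simp
  have HHx: "HH m (-\<xi>) = cos (c*\<xi>) / D"
  proof -
    have "-\<xi> \<in> {-(1/(2*m))..1/(2*m)}" using xi by auto
    then show ?thesis by (simp add: HH_def hh_eq)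
  qed
  have ta: "c * a = tt m" using m c2 by (simp add: a_def tt_def c_def field_simps)
  have Dt: "D = - c * sin (c*a) + c*a * sin (c*a) + cos (c*a)" unfolding D_def DD_def ta c_def[symmetric] by simp
  have "HH m (-\<xi>) - (\<integral>z. Lam z * HH m (-\<xi> - z) \<partial>lborel) = (- (2 - 2*a) * sin (c*a) / c + 2 * cos (c*a) / (c*c)) / D"
    unfolding I HHx using c0 D0 c2 by (simp add: field_simps)
  also have "\<dots> = D / D"
  proof -
    have c2': "c * (c * x) = 2 * x" for x using c2 by (simp add: mult.assoc[symmetric])
    have "- (2 - 2*a) * sin (c*a) / c + 2 * cos (c*a) / (c*c) = D"
      unfolding Dt using c0 c2 by (simp add: field_simps c2')
    then show ?thesis by simp
  qed
  finally show ?thesis using D0 by simp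
qed


lemma sinc_measurable[measurable]: "Defs.sinc \<in> borel_measurable borel"
  unfolding Defs.sinc_def[abs_def] by measurable

lemma sinc_abs_le: "\<bar>Defs.sinc y\<bar> \<le> 1"
proof (cases "y = 0")
  case False
  have "\<bar>sin (pi*y)\<bar> \<le> \<bar>pi*y\<bar>" by (rule abs_sin_x_le_abs_x)
  then show ?thesis using False by (simp add: Defs.sinc_def abs_divide divide_le_eq_1)
qed (simp add: Defs.sinc_def)

lemma sinc_sq_le: "(Defs.sinc y)^2 \<le> 2 * inverse (1 + y^2)"
proof (cases "\<bar>y\<bar> \<ge> 1")
  case True
  then have y0: "y \<noteq> 0" by auto
  have "(Defs.sinc y)^2 = (sin (pi*y))^2 / (pi^2 * y^2)" using y0 by (simp add: Defs.sinc_def power_divide power_mult_distrib)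
  also have "\<dots> \<le> 1 / (pi^2 * y^2)" using y0 by (intro divide_right_mono) (auto simp: abs_square_le_1)
  also have "\<dots> \<le> 1 / y^2"
  proof -
    have p: "1 \<le> pi^2" using pi_gt3 by (smt (verit) one_le_power)
    have y2: "0 < y^2" using y0 by simp
    have "y^2 \<le> pi^2 * y^2" using mult_right_mono[OF p, of "y^2"] by simp
    moreover have "0 < pi^2 * y^2 * y^2" using y2 by simp
    ultimately show ?thesis by (intro divide_left_mono) auto
  qed
  also have "\<dots> \<le> 2 * inverse (1 + y^2)"
  proof -
    have "1 \<le> y^2" using True by (metis abs_le_square_iff abs_one one_power2)
    then show ?thesis using y0 by (simp add: field_simps)
  qed
  finally show ?thesis .
next
  case False
  then have "y^2 \<le> 1" by (simp add: abs_le_square_iff[symmetric] abs_square_le_1)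
  then have "1 \<le> 2 * inverse (1 + y^2)"
    by (simp add: divide_inverse[symmetric] le_divide_eq add_pos_nonneg)
  moreover have "(Defs.sinc y)^2 \<le> 1" using sinc_abs_le[of y] by (simp add: abs_square_le_1)
  ultimately show ?thesis by linarith
qed

lemma inv_sq_integrable: "integrable lborel (\<lambda>x::real. inverse (1 + x^2))"
  using integrable_inverse_1_plus_square unfolding set_integrable_def by (simp add: einterval_def)

lemma sinc_sq_integrable: "c \<noteq> 0 \<Longrightarrow> integrable lborel (\<lambda>x. (Defs.sinc (t + c*x))^2)"
proof -
  assume c: "c \<noteq> 0"
  have "integrable lborel (\<lambda>x. (Defs.sinc x)^2)"
  proof (rule Bochner_Integration.integrable_bound[where f="\<lambda>x. 2 * inverse (1 + x^2)"])
    show "integrable lborel (\<lambda>x::real. 2 * inverse (1 + x^2))" using inv_sq_integrable by (rule integrable_mult_right)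
    show "(\<lambda>x. (Defs.sinc x)^2) \<in> borel_measurable lborel" by measurable
    show "AE x in lborel. norm ((Defs.sinc x)^2) \<le> norm (2 * inverse (1 + x^2))"
      using sinc_sq_le by (intro AE_I2) (simp add: abs_of_nonneg add_pos_nonneg)
  qed
  then show ?thesis using c by (intro lborel_integrable_real_affine) auto
qed

lemma Gr_measurable[measurable]: "Gr m \<in> borel_measurable borel"
  unfolding Gr_def[abs_def] s_plus_def by measurable

lemma Gc_Gr: "m > 0 \<Longrightarrow> Gc m (complex_of_real x) = complex_of_real (Gr m x)"
  using Gc_repr Gr_repr by simp

lemma Gr_bound: assumes m: "m \<ge> 1" shows "\<bar>Gr m x\<bar> \<le> 1 / (m * DD m)"
proof -
  have D: "m * DD m > 0" using DD_pos[OF m] m by simp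
  have "\<bar>s_plus (u_m m) (x/m)\<bar> \<le> 1"
  proof -
    have "\<bar>Defs.sinc (u_m m - x/m) + Defs.sinc (u_m m + x/m)\<bar> \<le> 2"
      using sinc_abs_le[of "u_m m - x/m"] sinc_abs_le[of "u_m m + x/m"] abs_triangle_ineq[of "Defs.sinc (u_m m - x/m)" "Defs.sinc (u_m m + x/m)"]
      by linarith
    then show ?thesis unfolding s_plus_def by (simp add: abs_divide)
  qed
  then show ?thesis using D unfolding Gr_def by (simp add: abs_divide divide_right_mono)
qed

lemma Gr_sq_integrable: assumes m: "m \<ge> 1" shows "integrable lborel (\<lambda>x. (Gr m x)^2)"
proof (rule Bochner_Integration.integrable_bound[where f="\<lambda>x. ((Defs.sinc (u_m m - x/m))^2 + (Defs.sinc (u_m m + x/m))^2) / (2 * (m * DD m)^2)"])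
  have D: "m * DD m > 0" using DD_pos[OF m] m by simp
  have i1: "integrable lborel (\<lambda>x. (Defs.sinc (u_m m - x/m))^2)"
    using sinc_sq_integrable[of "-1/m" "u_m m"] m by simp
  have i2: "integrable lborel (\<lambda>x. (Defs.sinc (u_m m + x/m))^2)"
    using sinc_sq_integrable[of "1/m" "u_m m"] m by simp
  show "integrable lborel (\<lambda>x. ((Defs.sinc (u_m m - x/m))^2 + (Defs.sinc (u_m m + x/m))^2) / (2 * (m * DD m)^2))"
    using i1 i2 by (intro integrable_divide Bochner_Integration.integrable_add)
  show "(\<lambda>x. (Gr m x)^2) \<in> borel_measurable lborel" by measurable
  show "AE x in lborel. norm ((Gr m x)^2) \<le> norm (((Defs.sinc (u_m m - x/m))^2 + (Defs.sinc (u_m m + x/m))^2) / (2 * (m * DD m)^2))"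
  proof (intro AE_I2)
    fix x
    define p where "p = Defs.sinc (u_m m - x/m)"
    define q where "q = Defs.sinc (u_m m + x/m)"
    have sp: "s_plus (u_m m) (x/m) = (p + q)/2" unfolding s_plus_def p_def q_def ..
    have e: "((p+q)/2)^2 = (p^2+q^2)/2 - ((p-q)/2)^2" by (simp add: power2_eq_square field_simps)
    have "((p+q)/2)^2 \<le> (p^2 + q^2)/2" unfolding e using zero_le_power2[of "(p-q)/2"] by linarith
    then have "((p+q)/2)^2 / (m * DD m)^2 \<le> ((p^2 + q^2)/2) / (m * DD m)^2"
      by (rule divide_right_mono) simp
    then have "(Gr m x)^2 \<le> (p^2 + q^2) / (2 * (m * DD m)^2)"
      unfolding Gr_def sp by (simp add: power_divide)
    then show "norm ((Gr m x)^2) \<le> norm (((Defs.sinc (u_m m - x/m))^2 + (Defs.sinc (u_m m + x/m))^2) / (2 * (m * DD m)^2))"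
      unfolding p_def[symmetric] q_def[symmetric] by simp
  qed
qed

lemma HH_bound: assumes m: "m \<ge> 1" shows "\<bar>HH m z\<bar> \<le> 1 / DD m"
proof -
  have D: "DD m > 0" using DD_pos[OF m] .
  have "\<bar>hh m z\<bar> \<le> 1 / DD m" using D by (simp add: hh_def abs_divide divide_right_mono)
  then show ?thesis using D by (simp add: HH_def indicator_def)
qed

lemma HH_isCont: assumes p: "\<bar>p\<bar> \<noteq> 1/(2*m)" shows "isCont (HH m) p"
proof (cases "\<bar>p\<bar> < 1/(2*m)")
  case True
  have "continuous_on {-(1/(2*m))<..<1/(2*m)} (HH m)"
  proof (rule continuous_on_eq[OF hh_cont])
    show "\<And>x. x \<in> {-(1/(2*m))<..<1/(2*m)} \<Longrightarrow> hh m x = HH m x" by (simp add: HH_def)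
  qed
  moreover have o: "open {-(1/(2*m))<..<1/(2*m)}" by simp
  ultimately have "\<forall>x\<in>{-(1/(2*m))<..<1/(2*m)}. isCont (HH m) x" using continuous_on_eq_continuous_at by blast
  moreover have "p \<in> {-(1/(2*m))<..<1/(2*m)}" using True by auto
  ultimately show ?thesis by (rule bspec)
next
  case False
  then have pg: "\<bar>p\<bar> > 1/(2*m)" using p by simp
  have "continuous_on {x. \<bar>x\<bar> > 1/(2*m)} (HH m)"
  proof (rule continuous_on_eq[OF continuous_on_const])
    show "\<And>x. x \<in> {x. \<bar>x\<bar> > 1/(2*m)} \<Longrightarrow> 0 = HH m x" by (auto simp: HH_def indicator_def)
  qed
  moreover have "open {x::real. \<bar>x\<bar> > 1/(2*m)}" by (intro open_Collect_less continuous_intros)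
  ultimately have "\<forall>x\<in>{x. \<bar>x\<bar> > 1/(2*m)}. isCont (HH m) x" using continuous_on_eq_continuous_at by blast
  moreover have "p \<in> {x. \<bar>x\<bar> > 1/(2*m)}" using pg by simp
  ultimately show ?thesis by (rule bspec)
qed


definition T1 :: "real \<Rightarrow> nat \<Rightarrow> real \<Rightarrow> real" where
  "T1 m k \<xi> = (\<integral>\<eta>. HH m \<eta> * kg (Suc k) (\<xi> + \<eta>) \<partial>lborel)"

lemma kg_plus: "kg n (\<xi> + \<eta>) = kg n (\<eta> - (-\<xi>))" by (simp add: add.commute)

lemma T1_measurable[measurable]: "T1 m k \<in> borel_measurable borel"
  unfolding T1_def[abs_def] by (rule lborel.borel_measurable_lebesgue_integral) simp

lemma T1_integrable: assumes m: "m \<ge> 1" shows "integrable lborel (\<lambda>\<eta>. HH m \<eta> * kg (Suc k) (\<xi> + \<eta>))"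
proof (rule Bochner_Integration.integrable_bound[where f="\<lambda>\<eta>. (1 / DD m) * kg (Suc k) (\<eta> - (-\<xi>))"])
  show "integrable lborel (\<lambda>\<eta>. (1 / DD m) * kg (Suc k) (\<eta> - (-\<xi>)))"
    by (intro integrable_mult_right kg_integrable') simp
  show "(\<lambda>\<eta>. HH m \<eta> * kg (Suc k) (\<xi> + \<eta>)) \<in> borel_measurable lborel" by measurable
  show "AE \<eta> in lborel. norm (HH m \<eta> * kg (Suc k) (\<xi> + \<eta>)) \<le> norm ((1 / DD m) * kg (Suc k) (\<eta> - (-\<xi>)))"
  proof (intro AE_I2)
    fix \<eta>
    have kp: "kg (Suc k) (\<xi> + \<eta>) > 0" by (rule kg_pos) simp
    have "\<bar>HH m \<eta>\<bar> * kg (Suc k) (\<xi> + \<eta>) \<le> (1 / DD m) * kg (Suc k) (\<xi> + \<eta>)"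
      using HH_bound[OF m] kp by (intro mult_right_mono) auto
    then show "norm (HH m \<eta> * kg (Suc k) (\<xi> + \<eta>)) \<le> norm ((1 / DD m) * kg (Suc k) (\<eta> - (-\<xi>)))"
      using kp DD_pos[OF m] by (simp add: abs_mult add.commute)
  qed
qed

lemma T1_bound: assumes m: "m \<ge> 1" shows "\<bar>T1 m k \<xi>\<bar> \<le> 1 / DD m"
proof -
  have "\<bar>T1 m k \<xi>\<bar> \<le> (\<integral>\<eta>. \<bar>HH m \<eta> * kg (Suc k) (\<xi> + \<eta>)\<bar> \<partial>lborel)"
    unfolding T1_def by (rule integral_abs_bound)
  also have "\<dots> \<le> (\<integral>\<eta>. (1 / DD m) * kg (Suc k) (\<eta> - (-\<xi>)) \<partial>lborel)"
  proof (rule integral_mono)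
    show "integrable lborel (\<lambda>\<eta>. \<bar>HH m \<eta> * kg (Suc k) (\<xi> + \<eta>)\<bar>)"
      using T1_integrable[OF m] by (rule integrable_abs)
    show "integrable lborel (\<lambda>\<eta>. (1 / DD m) * kg (Suc k) (\<eta> - (-\<xi>)))"
      by (intro integrable_mult_right kg_integrable') simp
    fix \<eta>
    have kp: "kg (Suc k) (\<xi> + \<eta>) > 0" by (rule kg_pos) simp
    have "\<bar>HH m \<eta>\<bar> * kg (Suc k) (\<xi> + \<eta>) \<le> (1 / DD m) * kg (Suc k) (\<xi> + \<eta>)"
      using HH_bound[OF m] kp by (intro mult_right_mono) auto
    then show "\<bar>HH m \<eta> * kg (Suc k) (\<xi> + \<eta>)\<bar> \<le> (1 / DD m) * kg (Suc k) (\<eta> - (-\<xi>))"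
      using kp by (simp add: abs_mult add.commute)
  qed
  also have "\<dots> = 1 / DD m" using kg_integral'[of "Suc k" "-\<xi>"] by simp
  finally show ?thesis .
qed

lemma T1_lim: assumes m: "m \<ge> 1" and xi: "\<bar>\<xi>\<bar> \<noteq> 1/(2*m)"
  shows "(\<lambda>k. T1 m k \<xi>) \<longlonglongrightarrow> HH m (-\<xi>)"
proof -
  have "(\<lambda>k. \<integral>z. kg (Suc k) (-\<xi> - z) *\<^sub>R HH m z \<partial>lborel) \<longlonglongrightarrow> HH m (-\<xi>)"
  proof (rule approx_id)
    show "HH m \<in> borel_measurable borel" by simp
    show "norm (HH m x) \<le> 1 / DD m" for x using HH_bound[OF m] by simp
    show "isCont (HH m) (-\<xi>)" using xi by (intro HH_isCont) simp
  qed
  moreover have "(\<integral>z. kg (Suc k) (-\<xi> - z) *\<^sub>R HH m z \<partial>lborel) = T1 m k \<xi>" for k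
  proof -
    have "kg (Suc k) (-\<xi> - z) = kg (Suc k) (\<xi> + z)" for z using kg_even[of "Suc k" "\<xi> + z"] by simp
    then show ?thesis unfolding T1_def by (simp add: mult.commute)
  qed
  ultimately show ?thesis by simp
qed

lemma A_eq: assumes m: "m \<ge> 1"
  shows "(\<integral>x. (complex_of_real (psi (Suc k) x) * cis (2*pi*x*\<xi>)) * complex_of_real (Gr m x) \<partial>lborel) = complex_of_real (T1 m k \<xi>)"
proof -
  have m0: "m > 0" using m by simp
  have phi: "integrable lborel (\<lambda>x. complex_of_real (psi (Suc k) x) * cis (2*pi*x*\<xi>))"
    by (rule Bochner_Integration.integrable_bound[where f="psi (Suc k)"])
       (auto intro!: psi_integrable AE_I2 simp: norm_mult psi_pos less_imp_le)
  have q: "integrable lborel (\<lambda>z. complex_of_real (HH m z))" using HH_integrable by (rule integrable_of_real)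
  have "(\<integral>x. (complex_of_real (psi (Suc k) x) * cis (2*pi*x*\<xi>)) * complex_of_real (Gr m x) \<partial>lborel)
      = (\<integral>x. (complex_of_real (psi (Suc k) x) * cis (2*pi*x*\<xi>)) * (\<integral>z. complex_of_real (HH m z) * cis (2*pi*x*z) \<partial>lborel) \<partial>lborel)"
    by (simp add: Gr_repr[OF m0])
  also have "\<dots> = (\<integral>z. complex_of_real (HH m z) * (\<integral>x. (complex_of_real (psi (Suc k) x) * cis (2*pi*x*\<xi>)) * cis (2*pi*x*z) \<partial>lborel) \<partial>lborel)"
    by (rule fubini_fourier[OF phi q])
  also have "\<dots> = (\<integral>z. complex_of_real (HH m z * kg (Suc k) (\<xi> + z)) \<partial>lborel)"
  proof (intro Bochner_Integration.integral_cong refl)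
    fix z
    have "(\<integral>x. (complex_of_real (psi (Suc k) x) * cis (2*pi*x*\<xi>)) * cis (2*pi*x*z) \<partial>lborel)
        = (\<integral>x. complex_of_real (psi (Suc k) x) * cis (2*pi*x*(\<xi> + z)) \<partial>lborel)"
      by (intro Bochner_Integration.integral_cong refl) (simp add: mult.assoc cis_mult distrib_left)
    also have "\<dots> = complex_of_real (kg (Suc k) (\<xi> + z))" by (rule psi_ft) simp
    finally show "complex_of_real (HH m z) * (\<integral>x. (complex_of_real (psi (Suc k) x) * cis (2*pi*x*\<xi>)) * cis (2*pi*x*z) \<partial>lborel)
        = complex_of_real (HH m z * kg (Suc k) (\<xi> + z))" by simp
  qed
  also have "\<dots> = complex_of_real (T1 m k \<xi>)" unfolding T1_def by (rule integral_complex_of_real)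
  finally show ?thesis .
qed

lemma B_eq: assumes m: "m \<ge> 1"
  shows "(\<integral>x. ((complex_of_real (psi (Suc k) x) * cis (2*pi*x*\<xi>)) * complex_of_real (Gr m x)) * complex_of_real ((Defs.sinc x)^2) \<partial>lborel)
     = complex_of_real (\<integral>z. Lam z * T1 m k (\<xi> + z) \<partial>lborel)"
proof -
  have m0: "m > 0" using m by simp
  have phi: "integrable lborel (\<lambda>x. (complex_of_real (psi (Suc k) x) * cis (2*pi*x*\<xi>)) * complex_of_real (Gr m x))"
  proof (rule Bochner_Integration.integrable_bound[where f="\<lambda>x. (1 / (m * DD m)) * psi (Suc k) x"])
    show "integrable lborel (\<lambda>x. (1 / (m * DD m)) * psi (Suc k) x)" by (intro integrable_mult_right psi_integrable) simp
    show "(\<lambda>x. (complex_of_real (psi (Suc k) x) * cis (2*pi*x*\<xi>)) * complex_of_real (Gr m x)) \<in> borel_measurable lborel"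
      by measurable
    show "AE x in lborel. norm ((complex_of_real (psi (Suc k) x) * cis (2*pi*x*\<xi>)) * complex_of_real (Gr m x)) \<le> norm ((1 / (m * DD m)) * psi (Suc k) x)"
    proof (intro AE_I2)
      fix x
      have "psi (Suc k) x * \<bar>Gr m x\<bar> \<le> psi (Suc k) x * (1 / (m * DD m))"
        using Gr_bound[OF m] psi_pos[of "Suc k" x] by (intro mult_left_mono) auto
      then show "norm ((complex_of_real (psi (Suc k) x) * cis (2*pi*x*\<xi>)) * complex_of_real (Gr m x)) \<le> norm ((1 / (m * DD m)) * psi (Suc k) x)"
        using psi_pos[of "Suc k" x] DD_pos[OF m] m by (simp add: norm_mult abs_mult mult.commute)
    qed
  qed
  have q: "integrable lborel (\<lambda>z. complex_of_real (Lam z))" using Lam_integrable by (rule integrable_of_real)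
  have "(\<integral>x. ((complex_of_real (psi (Suc k) x) * cis (2*pi*x*\<xi>)) * complex_of_real (Gr m x)) * complex_of_real ((Defs.sinc x)^2) \<partial>lborel)
      = (\<integral>x. ((complex_of_real (psi (Suc k) x) * cis (2*pi*x*\<xi>)) * complex_of_real (Gr m x)) * (\<integral>z. complex_of_real (Lam z) * cis (2*pi*x*z) \<partial>lborel) \<partial>lborel)"
    by (simp only: sinc_sq_ft)
  also have "\<dots> = (\<integral>z. complex_of_real (Lam z) * (\<integral>x. ((complex_of_real (psi (Suc k) x) * cis (2*pi*x*\<xi>)) * complex_of_real (Gr m x)) * cis (2*pi*x*z) \<partial>lborel) \<partial>lborel)"
    by (rule fubini_fourier[OF phi q])
  also have "\<dots> = (\<integral>z. complex_of_real (Lam z * T1 m k (\<xi> + z)) \<partial>lborel)"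
  proof (intro Bochner_Integration.integral_cong refl)
    fix z
    have "(\<integral>x. ((complex_of_real (psi (Suc k) x) * cis (2*pi*x*\<xi>)) * complex_of_real (Gr m x)) * cis (2*pi*x*z) \<partial>lborel)
        = (\<integral>x. (complex_of_real (psi (Suc k) x) * cis (2*pi*x*(\<xi> + z))) * complex_of_real (Gr m x) \<partial>lborel)"
    proof (intro Bochner_Integration.integral_cong refl)
      fix x
      have "cis (2*pi*x*\<xi>) * cis (2*pi*x*z) = cis (2*pi*x*(\<xi> + z))" by (simp add: cis_mult distrib_left)
      then show "((complex_of_real (psi (Suc k) x) * cis (2*pi*x*\<xi>)) * complex_of_real (Gr m x)) * cis (2*pi*x*z)
          = (complex_of_real (psi (Suc k) x) * cis (2*pi*x*(\<xi> + z))) * complex_of_real (Gr m x)"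
      proof -
        have r: "((a*b)*c)*d = (a*(b*d))*c" for a b c d :: complex by (simp add: ac_simps)
        show ?thesis using \<open>cis (2*pi*x*\<xi>) * cis (2*pi*x*z) = cis (2*pi*x*(\<xi> + z))\<close> by (simp only: r)
      qed
    qed
    also have "\<dots> = complex_of_real (T1 m k (\<xi> + z))" by (rule A_eq[OF m])
    finally show "complex_of_real (Lam z) * (\<integral>x. ((complex_of_real (psi (Suc k) x) * cis (2*pi*x*\<xi>)) * complex_of_real (Gr m x)) * cis (2*pi*x*z) \<partial>lborel)
        = complex_of_real (Lam z * T1 m k (\<xi> + z))" by simp
  qed
  also have "\<dots> = complex_of_real (\<integral>z. Lam z * T1 m k (\<xi> + z) \<partial>lborel)" by (rule integral_complex_of_real)
  finally show ?thesis .
qed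
lemma Phi_eq: assumes m: "m \<ge> 1"
  shows "(\<integral>x. complex_of_real (Gr m x * (1 - (Defs.sinc x)^2) * psi (Suc k) x) * cis (2*pi*x*\<xi>) \<partial>lborel)
    = complex_of_real (T1 m k \<xi> - (\<integral>z. Lam z * T1 m k (\<xi> + z) \<partial>lborel))"
proof -
  let ?A = "\<lambda>x. (complex_of_real (psi (Suc k) x) * cis (2*pi*x*\<xi>)) * complex_of_real (Gr m x)"
  have intA: "integrable lborel ?A"
  proof (rule Bochner_Integration.integrable_bound[where f="\<lambda>x. (1 / (m * DD m)) * psi (Suc k) x"])
    show "integrable lborel (\<lambda>x. (1 / (m * DD m)) * psi (Suc k) x)" by (intro integrable_mult_right psi_integrable) simp
    show "?A \<in> borel_measurable lborel" by measurable
    show "AE x in lborel. norm (?A x) \<le> norm ((1 / (m * DD m)) * psi (Suc k) x)"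
    proof (intro AE_I2)
      fix x
      have "psi (Suc k) x * \<bar>Gr m x\<bar> \<le> psi (Suc k) x * (1 / (m * DD m))"
        using Gr_bound[OF m] psi_pos[of "Suc k" x] by (intro mult_left_mono) auto
      then show "norm (?A x) \<le> norm ((1 / (m * DD m)) * psi (Suc k) x)"
        using psi_pos[of "Suc k" x] DD_pos[OF m] m by (simp add: norm_mult abs_mult mult.commute)
    qed
  qed
  have intB: "integrable lborel (\<lambda>x. ?A x * complex_of_real ((Defs.sinc x)^2))"
  proof (rule Bochner_Integration.integrable_bound[OF integrable_norm[OF intA]])
    show "(\<lambda>x. ?A x * complex_of_real ((Defs.sinc x)^2)) \<in> borel_measurable lborel" by measurable
    show "AE x in lborel. norm (?A x * complex_of_real ((Defs.sinc x)^2)) \<le> norm (norm (?A x))"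
    proof (intro AE_I2)
      fix x
      have "(Defs.sinc x)^2 \<le> 1" using sinc_abs_le[of x] by (simp add: abs_square_le_1)
      then have "norm (?A x) * (Defs.sinc x)^2 \<le> norm (?A x)" by (intro mult_left_le) auto
      then show "norm (?A x * complex_of_real ((Defs.sinc x)^2)) \<le> norm (norm (?A x))"
        by (simp add: norm_mult norm_power del: of_real_power)
    qed
  qed
  have "(\<integral>x. complex_of_real (Gr m x * (1 - (Defs.sinc x)^2) * psi (Suc k) x) * cis (2*pi*x*\<xi>) \<partial>lborel)
      = (\<integral>x. ?A x - ?A x * complex_of_real ((Defs.sinc x)^2) \<partial>lborel)"
    by (intro Bochner_Integration.integral_cong refl) (simp add: algebra_simps)
  also have "\<dots> = (\<integral>x. ?A x \<partial>lborel) - (\<integral>x. ?A x * complex_of_real ((Defs.sinc x)^2) \<partial>lborel)"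
    by (rule Bochner_Integration.integral_diff[OF intA intB])
  also have "\<dots> = complex_of_real (T1 m k \<xi>) - complex_of_real (\<integral>z. Lam z * T1 m k (\<xi> + z) \<partial>lborel)"
    using A_eq[OF m] B_eq[OF m] by simp
  finally show ?thesis by simp
qed
definition R :: "real \<Rightarrow> nat \<Rightarrow> real \<Rightarrow> real" where
  "R m k \<xi> = T1 m k \<xi> - (\<integral>z. Lam z * T1 m k (\<xi> + z) \<partial>lborel)"

lemma R_measurable[measurable]: "R m k \<in> borel_measurable borel"
proof -
  have "(\<lambda>\<xi>. \<integral>z. Lam z * T1 m k (\<xi> + z) \<partial>lborel) \<in> borel_measurable borel"
    by (rule lborel.borel_measurable_lebesgue_integral) simp
  then show ?thesis unfolding R_def[abs_def] by simp
qed

lemma LamT1_integrable: assumes m: "m \<ge> 1" shows "integrable lborel (\<lambda>z. Lam z * T1 m k (\<xi> + z))"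
proof (rule Bochner_Integration.integrable_bound[where f="\<lambda>z. (1 / DD m) * Lam z"])
  show "integrable lborel (\<lambda>z. (1 / DD m) * Lam z)" using Lam_integrable by (rule integrable_mult_right)
  show "(\<lambda>z. Lam z * T1 m k (\<xi> + z)) \<in> borel_measurable lborel" by measurable
  show "AE z in lborel. norm (Lam z * T1 m k (\<xi> + z)) \<le> norm ((1 / DD m) * Lam z)"
  proof (intro AE_I2)
    fix z
    have "Lam z * \<bar>T1 m k (\<xi> + z)\<bar> \<le> Lam z * (1 / DD m)"
      using T1_bound[OF m] Lam_nonneg by (intro mult_left_mono) auto
    then show "norm (Lam z * T1 m k (\<xi> + z)) \<le> norm ((1 / DD m) * Lam z)"
      using Lam_nonneg[of z] DD_pos[OF m] by (simp add: abs_mult mult.commute)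
  qed
qed

lemma R_bound: assumes m: "m \<ge> 1" shows "\<bar>R m k \<xi>\<bar> \<le> 2 / DD m"
proof -
  have "\<bar>\<integral>z. Lam z * T1 m k (\<xi> + z) \<partial>lborel\<bar> \<le> (\<integral>z. (1 / DD m) * Lam z \<partial>lborel)"
  proof -
    have "\<bar>\<integral>z. Lam z * T1 m k (\<xi> + z) \<partial>lborel\<bar> \<le> (\<integral>z. \<bar>Lam z * T1 m k (\<xi> + z)\<bar> \<partial>lborel)"
      by (rule integral_abs_bound)
    also have "\<dots> \<le> (\<integral>z. (1 / DD m) * Lam z \<partial>lborel)"
    proof (rule integral_mono)
      show "integrable lborel (\<lambda>z. \<bar>Lam z * T1 m k (\<xi> + z)\<bar>)" using LamT1_integrable[OF m] by (rule integrable_abs)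
      show "integrable lborel (\<lambda>z. (1 / DD m) * Lam z)" using Lam_integrable by (rule integrable_mult_right)
      fix z
      have "Lam z * \<bar>T1 m k (\<xi> + z)\<bar> \<le> Lam z * (1 / DD m)"
        using T1_bound[OF m] Lam_nonneg by (intro mult_left_mono) auto
      then show "\<bar>Lam z * T1 m k (\<xi> + z)\<bar> \<le> (1 / DD m) * Lam z"
        using Lam_nonneg[of z] by (simp add: abs_mult mult.commute)
    qed
    finally show ?thesis .
  qed
  also have "\<dots> = 1 / DD m" using Lam_integral by simp
  finally have "\<bar>\<integral>z. Lam z * T1 m k (\<xi> + z) \<partial>lborel\<bar> \<le> 1 / DD m" .
  then show ?thesis using T1_bound[OF m, of k \<xi>] unfolding R_def by linarith
qed

lemma R_lim: assumes m: "m \<ge> 1" and xi: "\<bar>\<xi>\<bar> < 1/(2*m)"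
  shows "(\<lambda>k. R m k \<xi>) \<longlonglongrightarrow> 1"
proof -
  have l1: "(\<lambda>k. T1 m k \<xi>) \<longlonglongrightarrow> HH m (-\<xi>)" using xi by (intro T1_lim[OF m]) simp
  have l2: "(\<lambda>k. \<integral>z. Lam z * T1 m k (\<xi> + z) \<partial>lborel) \<longlonglongrightarrow> (\<integral>z. Lam z * HH m (-\<xi> - z) \<partial>lborel)"
  proof (rule integral_dominated_convergence[where w="\<lambda>z. (1 / DD m) * Lam z"])
    show "(\<lambda>z. Lam z * HH m (-\<xi> - z)) \<in> borel_measurable lborel" by measurable
    show "(\<lambda>z. Lam z * T1 m k (\<xi> + z)) \<in> borel_measurable lborel" for k by measurable
    show "integrable lborel (\<lambda>z. (1 / DD m) * Lam z)" using Lam_integrable by (rule integrable_mult_right)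
    show "AE z in lborel. (\<lambda>k. Lam z * T1 m k (\<xi> + z)) \<longlonglongrightarrow> Lam z * HH m (-\<xi> - z)"
      using AE_lborel_singleton[of "1/(2*m) - \<xi>"] AE_lborel_singleton[of "-(1/(2*m)) - \<xi>"]
    proof eventually_elim
      fix z assume z1: "z \<noteq> 1/(2*m) - \<xi>" and z2: "z \<noteq> -(1/(2*m)) - \<xi>"
      have "\<bar>\<xi> + z\<bar> \<noteq> 1/(2*m)" using z1 z2 by (auto simp: abs_if split: if_splits)
      then have "(\<lambda>k. T1 m k (\<xi> + z)) \<longlonglongrightarrow> HH m (-(\<xi> + z))" by (rule T1_lim[OF m])
      then show "(\<lambda>k. Lam z * T1 m k (\<xi> + z)) \<longlonglongrightarrow> Lam z * HH m (-\<xi> - z)"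
        by (intro tendsto_mult tendsto_const) simp
    qed
    show "AE z in lborel. norm (Lam z * T1 m k (\<xi> + z)) \<le> (1 / DD m) * Lam z" for k
    proof (intro AE_I2)
      fix z
      have "Lam z * \<bar>T1 m k (\<xi> + z)\<bar> \<le> Lam z * (1 / DD m)"
        using T1_bound[OF m] Lam_nonneg by (intro mult_left_mono) auto
      then show "norm (Lam z * T1 m k (\<xi> + z)) \<le> (1 / DD m) * Lam z"
        using Lam_nonneg[of z] by (simp add: abs_mult mult.commute)
    qed
  qed
  have "(\<lambda>k. R m k \<xi>) \<longlonglongrightarrow> HH m (-\<xi>) - (\<integral>z. Lam z * HH m (-\<xi> - z) \<partial>lborel)"
    unfolding R_def by (intro tendsto_diff l1 l2)
  then show ?thesis using HH_identity[OF m xi] by simp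
qed
lemma reproduce:
  assumes m: "m \<ge> 1" and F: "F \<in> PW (1/(2*m))"
  shows "F 0 = (\<integral>x. F (complex_of_real x) * cnj (Gc m (complex_of_real x)) * complex_of_real (1 - (Defs.sinc x)^2) \<partial>lborel)"
proof -
  have m0: "m > 0" using m by simp
  obtain gh :: "real \<Rightarrow> complex" where ghm[measurable]: "gh \<in> borel_measurable borel" and ghi: "integrable lborel gh"
    and gh2: "integrable lborel (\<lambda>z. (cmod (gh z))^2)" and gh0: "\<And>z. z \<notin> {-(1/(2*m))..1/(2*m)} \<Longrightarrow> gh z = 0"
    and Fr: "\<And>x. F (complex_of_real x) = (\<integral>z. gh z * cis (2*pi*x*z) \<partial>lborel)"
    using pw_repr[OF F] by blast
  define Fr where "Fr x = F (complex_of_real x)" for x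
  have Fr_eq: "Fr x = (\<integral>z. gh z * cis (2*pi*x*z) \<partial>lborel)" for x unfolding Fr_def by (rule Fr)
  have Frm[measurable]: "Fr \<in> borel_measurable borel"
  proof -
    have "(\<lambda>x. \<integral>z. gh z * cis (2*pi*x*z) \<partial>lborel) \<in> borel_measurable borel"
      by (rule lborel.borel_measurable_lebesgue_integral) simp
    moreover have "Fr = (\<lambda>x. \<integral>z. gh z * cis (2*pi*x*z) \<partial>lborel)" by (rule ext) (rule Fr_eq)
    ultimately show ?thesis by simp
  qed
  have F0: "F 0 = (\<integral>z. gh z \<partial>lborel)" using Fr[of 0] by simp
  have Fr2: "integrable lborel (\<lambda>x. (cmod (Fr x))^2)" by (rule pw_L2[OF ghm ghi gh2 Fr_eq])
  define GW where "GW x = Gr m x * (1 - (Defs.sinc x)^2)" for x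
  have GWm[measurable]: "GW \<in> borel_measurable borel" unfolding GW_def[abs_def] by measurable
  have W01: "0 \<le> 1 - (Defs.sinc x)^2" "1 - (Defs.sinc x)^2 \<le> 1" for x
    using sinc_abs_le[of x] by (auto simp: abs_square_le_1)
  have GWb: "\<bar>GW x\<bar> \<le> \<bar>Gr m x\<bar>" for x
    unfolding GW_def abs_mult using W01[of x] by (intro mult_left_le) auto
  have integrand: "F (complex_of_real x) * cnj (Gc m (complex_of_real x)) * complex_of_real (1 - (Defs.sinc x)^2) = Fr x * complex_of_real (GW x)" for x
    by (simp add: Fr_def GW_def Gc_Gr[OF m0])
  have int_main: "integrable lborel (\<lambda>x. Fr x * complex_of_real (GW x))"
  proof (rule Bochner_Integration.integrable_bound[where f="\<lambda>x. ((cmod (Fr x))^2 + (Gr m x)^2) / 2"])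
    show "integrable lborel (\<lambda>x. ((cmod (Fr x))^2 + (Gr m x)^2) / 2)"
      using Fr2 Gr_sq_integrable[OF m] by (intro integrable_divide Bochner_Integration.integrable_add)
    show "(\<lambda>x. Fr x * complex_of_real (GW x)) \<in> borel_measurable lborel" by measurable
    show "AE x in lborel. norm (Fr x * complex_of_real (GW x)) \<le> norm (((cmod (Fr x))^2 + (Gr m x)^2) / 2)"
    proof (intro AE_I2)
      fix x
      have "cmod (Fr x) * \<bar>GW x\<bar> \<le> cmod (Fr x) * \<bar>Gr m x\<bar>" using GWb by (intro mult_left_mono) auto
      also have "\<dots> \<le> ((cmod (Fr x))^2 + (Gr m x)^2) / 2"
        using sum_squares_bound[of "cmod (Fr x)" "\<bar>Gr m x\<bar>"] by (simp add: power2_eq_square)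
      finally show "norm (Fr x * complex_of_real (GW x)) \<le> norm (((cmod (Fr x))^2 + (Gr m x)^2) / 2)"
        by (simp add: norm_mult)
    qed
  qed
  have lim1: "(\<lambda>k. \<integral>x. Fr x * complex_of_real (GW x * psi (Suc k) x) \<partial>lborel) \<longlonglongrightarrow> (\<integral>x. Fr x * complex_of_real (GW x) \<partial>lborel)"
  proof (rule integral_dominated_convergence[where w="\<lambda>x. norm (Fr x * complex_of_real (GW x))"])
    show "(\<lambda>x. Fr x * complex_of_real (GW x)) \<in> borel_measurable lborel" by measurable
    show "(\<lambda>x. Fr x * complex_of_real (GW x * psi (Suc k) x)) \<in> borel_measurable lborel" for k by measurable
    show "integrable lborel (\<lambda>x. norm (Fr x * complex_of_real (GW x)))" using int_main by (rule integrable_norm)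
    show "AE x in lborel. (\<lambda>k. Fr x * complex_of_real (GW x * psi (Suc k) x)) \<longlonglongrightarrow> Fr x * complex_of_real (GW x)"
    proof (intro AE_I2)
      fix x
      have "(\<lambda>k. GW x * psi (Suc k) x) \<longlonglongrightarrow> GW x * 1" by (intro tendsto_mult tendsto_const psi_lim)
      then have "(\<lambda>k. complex_of_real (GW x * psi (Suc k) x)) \<longlonglongrightarrow> complex_of_real (GW x)"
        by (intro tendsto_of_real) simp
      then show "(\<lambda>k. Fr x * complex_of_real (GW x * psi (Suc k) x)) \<longlonglongrightarrow> Fr x * complex_of_real (GW x)"
        by (intro tendsto_mult tendsto_const)
    qed
    show "AE x in lborel. norm (Fr x * complex_of_real (GW x * psi (Suc k) x)) \<le> norm (Fr x * complex_of_real (GW x))" for k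
    proof (intro AE_I2)
      fix x
      have "\<bar>GW x\<bar> * psi (Suc k) x \<le> \<bar>GW x\<bar>" using psi_le1 psi_pos[of "Suc k" x] by (intro mult_left_le) auto
      then have "cmod (Fr x) * (\<bar>GW x\<bar> * psi (Suc k) x) \<le> cmod (Fr x) * \<bar>GW x\<bar>" by (intro mult_left_mono) auto
      then show "norm (Fr x * complex_of_real (GW x * psi (Suc k) x)) \<le> norm (Fr x * complex_of_real (GW x))"
        using psi_pos[of "Suc k" x] by (simp add: norm_mult abs_mult)
    qed
  qed
  have eqk: "(\<integral>x. Fr x * complex_of_real (GW x * psi (Suc k) x) \<partial>lborel) = (\<integral>\<xi>. gh \<xi> * complex_of_real (R m k \<xi>) \<partial>lborel)" for k
  proof -
    have phi: "integrable lborel (\<lambda>x. complex_of_real (GW x * psi (Suc k) x))"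
    proof (rule Bochner_Integration.integrable_bound[where f="\<lambda>x. (1 / (m * DD m)) * psi (Suc k) x"])
      show "integrable lborel (\<lambda>x. (1 / (m * DD m)) * psi (Suc k) x)" by (intro integrable_mult_right psi_integrable) simp
      show "(\<lambda>x. complex_of_real (GW x * psi (Suc k) x)) \<in> borel_measurable lborel" by measurable
      show "AE x in lborel. norm (complex_of_real (GW x * psi (Suc k) x)) \<le> norm ((1 / (m * DD m)) * psi (Suc k) x)"
      proof (intro AE_I2)
        fix x
        have "\<bar>GW x\<bar> \<le> 1 / (m * DD m)" using GWb[of x] Gr_bound[OF m, of x] by linarith
        then have "\<bar>GW x\<bar> * psi (Suc k) x \<le> (1 / (m * DD m)) * psi (Suc k) x"
          using psi_pos[of "Suc k" x] by (intro mult_right_mono) auto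
        then show "norm (complex_of_real (GW x * psi (Suc k) x)) \<le> norm ((1 / (m * DD m)) * psi (Suc k) x)"
          using psi_pos[of "Suc k" x] DD_pos[OF m] m by (simp add: abs_mult norm_mult del: of_real_mult)
      qed
    qed
    have "(\<integral>x. Fr x * complex_of_real (GW x * psi (Suc k) x) \<partial>lborel) = (\<integral>x. complex_of_real (GW x * psi (Suc k) x) * (\<integral>z. gh z * cis (2*pi*x*z) \<partial>lborel) \<partial>lborel)"
      by (simp add: Fr_eq mult.commute)
    also have "\<dots> = (\<integral>\<xi>. gh \<xi> * (\<integral>x. complex_of_real (GW x * psi (Suc k) x) * cis (2*pi*x*\<xi>) \<partial>lborel) \<partial>lborel)"
      by (rule fubini_fourier[OF phi ghi])
    also have "\<dots> = (\<integral>\<xi>. gh \<xi> * complex_of_real (R m k \<xi>) \<partial>lborel)"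
      unfolding GW_def R_def using Phi_eq[OF m] by simp
    finally show ?thesis .
  qed
  have lim2: "(\<lambda>k. \<integral>\<xi>. gh \<xi> * complex_of_real (R m k \<xi>) \<partial>lborel) \<longlonglongrightarrow> (\<integral>\<xi>. gh \<xi> \<partial>lborel)"
  proof (rule integral_dominated_convergence[where w="\<lambda>\<xi>. (2 / DD m) * norm (gh \<xi>)"])
    show "gh \<in> borel_measurable lborel" by simp
    show "(\<lambda>\<xi>. gh \<xi> * complex_of_real (R m k \<xi>)) \<in> borel_measurable lborel" for k by measurable
    show "integrable lborel (\<lambda>\<xi>. (2 / DD m) * norm (gh \<xi>))" using ghi by (intro integrable_mult_right integrable_norm)
    show "AE \<xi> in lborel. (\<lambda>k. gh \<xi> * complex_of_real (R m k \<xi>)) \<longlonglongrightarrow> gh \<xi>"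
      using AE_lborel_singleton[of "1/(2*m)"] AE_lborel_singleton[of "-(1/(2*m))"]
    proof eventually_elim
      fix \<xi> :: real assume x1: "\<xi> \<noteq> 1/(2*m)" and x2: "\<xi> \<noteq> -(1/(2*m))"
      show "(\<lambda>k. gh \<xi> * complex_of_real (R m k \<xi>)) \<longlonglongrightarrow> gh \<xi>"
      proof (cases "\<bar>\<xi>\<bar> < 1/(2*m)")
        case True
        have "(\<lambda>k. complex_of_real (R m k \<xi>)) \<longlonglongrightarrow> complex_of_real 1"
          by (intro tendsto_of_real R_lim[OF m True])
        then have "(\<lambda>k. gh \<xi> * complex_of_real (R m k \<xi>)) \<longlonglongrightarrow> gh \<xi> * complex_of_real 1"
          by (intro tendsto_mult tendsto_const)
        then show ?thesis by simp
      next
        case False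
        then have "\<xi> \<notin> {-(1/(2*m))..1/(2*m)}" using x1 x2 by auto
        then show ?thesis using gh0 by simp
      qed
    qed
    show "AE \<xi> in lborel. norm (gh \<xi> * complex_of_real (R m k \<xi>)) \<le> (2 / DD m) * norm (gh \<xi>)" for k
    proof (intro AE_I2)
      fix \<xi>
      have "norm (gh \<xi>) * \<bar>R m k \<xi>\<bar> \<le> norm (gh \<xi>) * (2 / DD m)" using R_bound[OF m] by (intro mult_left_mono) auto
      then show "norm (gh \<xi> * complex_of_real (R m k \<xi>)) \<le> (2 / DD m) * norm (gh \<xi>)" by (simp add: norm_mult mult.commute)
    qed
  qed
  have "(\<integral>x. Fr x * complex_of_real (GW x) \<partial>lborel) = (\<integral>\<xi>. gh \<xi> \<partial>lborel)"
    using lim1 lim2 unfolding eqk by (rule LIMSEQ_unique)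
  then show ?thesis unfolding F0 integrand by simp
qed


lemma K_eq_G:
  assumes m: "m \<ge> 1" and K: "is_repr_kernel (1 / (2 * m)) K"
  shows "K 0 (complex_of_real y) = Gc m (complex_of_real y)"
proof -
  define w where "w x = complex_of_real (1 - (Defs.sinc x)^2)" for x
  have KPW: "\<And>z. K z \<in> PW (1/(2*m))" and rep: "\<And>f z. f \<in> PW (1/(2*m)) \<Longrightarrow> f z = (\<integral>x. f (complex_of_real x) * cnj (K z (complex_of_real x)) * w x \<partial>lborel)"
    using K unfolding is_repr_kernel_def w_def by auto
  let ?y = "complex_of_real y"
  have cw: "cnj (w x) = w x" for x by (simp add: w_def)
  have "K 0 ?y = (\<integral>x. K 0 (complex_of_real x) * cnj (K ?y (complex_of_real x)) * w x \<partial>lborel)"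
    by (rule rep[OF KPW])
  also have "\<dots> = (\<integral>x. cnj (K ?y (complex_of_real x) * cnj (K 0 (complex_of_real x)) * w x) \<partial>lborel)"
    by (intro Bochner_Integration.integral_cong refl) (simp add: cw)
  also have "\<dots> = cnj (\<integral>x. K ?y (complex_of_real x) * cnj (K 0 (complex_of_real x)) * w x \<partial>lborel)"
    by (rule Bochner_Integration.integral_cnj)
  also have "(\<integral>x. K ?y (complex_of_real x) * cnj (K 0 (complex_of_real x)) * w x \<partial>lborel) = K ?y 0"
    by (rule rep[OF KPW, symmetric])
  also have "K ?y 0 = (\<integral>x. K ?y (complex_of_real x) * cnj (Gc m (complex_of_real x)) * w x \<partial>lborel)"
    unfolding w_def by (rule reproduce[OF m KPW])
  also have "cnj \<dots> = (\<integral>x. cnj (K ?y (complex_of_real x) * cnj (Gc m (complex_of_real x)) * w x) \<partial>lborel)"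
    by (rule Bochner_Integration.integral_cnj[symmetric])
  also have "\<dots> = (\<integral>x. Gc m (complex_of_real x) * cnj (K ?y (complex_of_real x)) * w x \<partial>lborel)"
    by (intro Bochner_Integration.integral_cong refl) (simp add: cw)
  also have "\<dots> = Gc m ?y"
    by (rule rep[OF Gc_PW, symmetric])
  finally show ?thesis .
qed

lemma pi_u: "m > 0 \<Longrightarrow> pi * u_m m = tt m"
  by (simp add: u_m_def tt_def)

theorem mainTheorem4:
  fixes m :: real and K :: "complex \<Rightarrow> complex \<Rightarrow> complex"
  assumes "m \<ge> 1"
    and "is_repr_kernel (1 / (2 * m)) K"
  shows "(\<forall>y::real. kscaled m K 0 (of_real y) =
           of_real (s_plus (u_m m) y /
             (- sqrt 2 * sin (pi * u_m m) + pi * u_m m * sin (pi * u_m m) + cos (pi * u_m m)))) \<and>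
         K 0 0 = of_real (1 / ((1 / sqrt 2) * cot (1 / (sqrt 2 * m)) - (2 * m - 1) / (2 * m)))"
proof -
  have m: "m \<ge> 1" by fact
  have m0: "m > 0" using m by simp
  have D: "DD m > 0" by (rule DD_pos[OF m])
  have Dform: "- sqrt 2 * sin (pi * u_m m) + pi * u_m m * sin (pi * u_m m) + cos (pi * u_m m) = DD m"
    unfolding pi_u[OF m0] DD_def ..
  have part1: "kscaled m K 0 (of_real y) = of_real (s_plus (u_m m) y / DD m)" for y
  proof -
    have "kscaled m K 0 (of_real y) = of_real m * K 0 (complex_of_real (m * y))"
      by (simp add: kscaled_def)
    also have "\<dots> = of_real m * Gc m (complex_of_real (m * y))"
      by (simp only: K_eq_G[OF m assms(2)])
    also have "\<dots> = of_real m * of_real (Gr m (m * y))" by (simp only: Gc_Gr[OF m0])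
    also have "\<dots> = of_real (m * Gr m (m * y))" by simp
    also have "m * Gr m (m * y) = s_plus (u_m m) y / DD m"
      using m0 D by (simp add: Gr_def)
    finally show ?thesis .
  qed
  have part2: "K 0 0 = of_real (1 / ((1 / sqrt 2) * cot (1 / (sqrt 2 * m)) - (2 * m - 1) / (2 * m)))"
  proof -
    define t where "t = tt m"
    have r2: "sqrt 2 \<ge> (1::real)" by simp
    have sm: "sqrt 2 * m \<ge> 1" using mult_mono[OF r2 m] by simp
    have t0: "t > 0" using m0 by (simp add: t_def tt_def)
    have t1: "t < pi"
    proof -
      have "t \<le> 1" using sm unfolding t_def tt_def by simp
      then show ?thesis using pi_gt3 by simp
    qed
    have st: "sin t > 0" using t0 t1 by (rule sin_gt_zero)
    have s2: "sqrt 2 * sqrt 2 = (2::real)" by simp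
    have tm: "t * m = 1 / sqrt 2" using m0 by (simp add: t_def tt_def)
    have "K 0 0 = Gc m (complex_of_real 0)" using K_eq_G[OF m assms(2), of 0] by simp
    also have "\<dots> = of_real (Gr m 0)" by (rule Gc_Gr[OF m0])
    also have "Gr m 0 = sin t / (t * (m * DD m))"
    proof -
      have "u_m m \<noteq> 0" using m0 by (simp add: u_m_def)
      then show ?thesis using m0 t0 by (simp add: Gr_def s_plus_def Defs.sinc_def pi_u t_def)
    qed
    also have "\<dots> = sqrt 2 * sin t / DD m"
    proof -
      have "t * (m * DD m) = (t * m) * DD m" by (simp only: mult.assoc)
      also have "\<dots> = DD m / sqrt 2" unfolding tm by simp
      finally show ?thesis by simp
    qed
    also have "\<dots> = 1 / ((1 / sqrt 2) * cot (1 / (sqrt 2 * m)) - (2 * m - 1) / (2 * m))"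
    proof -
      have cot: "cot (1 / (sqrt 2 * m)) = cos t / sin t" by (simp add: t_def tt_def cot_def)
      have ts: "t / sqrt 2 = 1 / (2 * m)"
      proof -
        have "t / sqrt 2 = 1 / ((sqrt 2 * sqrt 2) * m)" unfolding t_def tt_def by (simp add: mult_ac)
        then show ?thesis unfolding s2 .
      qed
      have e: "(2 * m - 1) / (2 * m) = 1 - t / sqrt 2"
        unfolding ts using m0 by (simp add: diff_divide_distrib)
      have "DD m / (sqrt 2 * sin t) = (1 / sqrt 2) * (cos t / sin t) - (1 - t / sqrt 2)"
        using st unfolding DD_def t_def[symmetric] by (simp add: add_divide_distrib diff_divide_distrib)
      then have "(1 / sqrt 2) * (cos t / sin t) - (1 - t / sqrt 2) = DD m / (sqrt 2 * sin t)" by simp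
      then show ?thesis unfolding cot e by simp
    qed
    finally show ?thesis .
  qed
  show ?thesis using part1 part2 Dform by simp
qed

end
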